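(* Let $\gamma=\gamma(s)$, $s$ in an open interval containing $0$, be a smooth unit-speed curve in $\mathrm{Im}(\mathbb O)$ with $k_1=\|\gamma_{ss}\|>0$ everywhere, let $(I_4,I_1,I_2,I_3,I_5,I_6,I_7)$ be its $G_2$-frame, and let $(e_4,e_1,e_2,e_3,\overline e_1,\overline e_2,\overline e_3)$ be the associated complexified $G_2$-frame, with $\varphi_1,\varphi_2,\varphi_3$ as defined in the context. Then \begin{align*} e_{4s}&=\varphi_1 e_1+\overline{\varphi}_1\overline e_1,\\ e_{1s}&=-\overline{\varphi}_1 e_4+\varphi_2 e_2,\\ e_{2s}&=-\overline{\varphi}_2 e_1+\varphi_3 e_3-\tfrac{\sqrt{-1}}{\sqrt2}\varphi_1\overline e_3,\\ e_{3s}&=-\overline{\varphi}_3 e_2+\tfrac{\sqrt{-1}}{\sqrt2}\varphi_1\overline e_2,\\ \overline e_{1s}&=-\varphi_1 e_4+\overline{\varphi}_2\overline e_2,\\ \overline e_{2s}&=\tfrac{\sqrt{-1}}{\sqrt2}\overline{\varphi}_1 e_3-\varphi_2\overline e_1+\overline{\varphi}_3\overline e_3,\\ \overline e_{3s}&=-\tfrac{\sqrt{-1}}{\sqrt2}\overline{\varphi}_1 e_2-\varphi_3\overline e_2 . \end{align*}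
   Context: $\mathbb O$ denotes the octonions: every octonion is $a+bl$ with $a,b$ quaternions, with product $(a+bl)(c+dl)=(ac-d\bar b)+(\bar a d+cb)l$ (bar = quaternion conjugation), real basis $1,i,j,k,l,il,jl,kl$, conjugation $\overline{a+bl}=\bar a-bl$, inner product $\langle x,y\rangle=\frac12(\bar xy+\bar yx)$, $\mathrm{Im}(\mathbb O)=\{x:\langle x,1\rangle=0\}\cong\mathbb R^7$, and cross product $x\times y=\frac12(\bar yx-\bar xy)$ on $\mathrm{Im}(\mathbb O)$. $G_2$-frame of a unit-speed curve $\gamma(s)$ with $k_1=\|\gamma_{ss}\|>0$: $I_4=\gamma_s$, $I_1=I_{4s}/k_1$, $I_5=I_1\times I_4$, $\kappa_2=\sqrt{\|I_{1s}\|^2-\langle I_{1s},I_4\rangle^2-\langle I_{1s},I_5\rangle^2}$; if $\kappa_2>0$, $I_2=\kappa_2^{-1}(I_{1s}-\langle I_{1s},I_4\rangle I_4-\langle I_{1s},I_5\rangle I_5)$, while if $\kappa_2\equiv0$, $I_2$ is a smooth unit vector field orthogonal to $I_4,I_1,I_5$; then $I_3=I_1\times I_2$, $I_6=I_2\times I_4$, $I_7=I_3\times I_4$. Set $\rho_1=\langle I_{1s},I_5\rangle$, $\rho_2=\langle I_{2s},I_6\rangle$, $\rho_3=\langle I_{3s},I_7\rangle$, $\alpha=\langle I_{2s},I_3\rangle$, $\beta_1=\langle I_{2s},I_7\rangle$, $\beta_2=\langle I_{3s},I_6\rangle$, and $r=\frac1{\sqrt2}e^{-\sqrt{-1}\int_0^s\rho_1}$,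 $q=\frac1{\sqrt2}e^{-\sqrt{-1}\int_0^s\rho_2}$, $p=\frac1{\sqrt2}e^{-\sqrt{-1}\int_0^s\rho_3}$. In $\mathbb C\otimes_{\mathbb R}\mathbb O$ (with complex unit $\sqrt{-1}$ distinct from the octonion units, bar denoting complex conjugation $\overline{x_1+\sqrt{-1}x_2}=x_1-\sqrt{-1}x_2$ for $x_1,x_2\in\mathbb O$) the complexified $G_2$-frame is $e_4=I_4$, $e_1=r(I_1-\sqrt{-1}I_5)$, $e_2=q(I_2-\sqrt{-1}I_6)$, $e_3=-p(I_3-\sqrt{-1}I_7)$ and their complex conjugates $\overline e_1,\overline e_2,\overline e_3$. Finally $\varphi_1=k_1\overline r$, $\varphi_2=2\kappa_2 r\overline q$, $\varphi_3=-\sqrt2\,q^2r\,[2\alpha+\sqrt{-1}(\beta_1+\beta_2)]$. *)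

theory Defs
  imports "HOL-Analysis.Analysis"
begin

section \<open>Quaternions and octonions (Cayley--Dickson, as in the paper)\<close>

text \<open>A quaternion a0 + a1 i + a2 j + a3 k is the tuple (a0,a1,a2,a3).\<close>
type_synonym quat = "real \<times> real \<times> real \<times> real"

definition qmul :: "quat \<Rightarrow> quat \<Rightarrow> quat" where
  "qmul = (\<lambda>(a0,a1,a2,a3) (b0,b1,b2,b3).
     (a0*b0 - a1*b1 - a2*b2 - a3*b3,
      a0*b1 + a1*b0 + a2*b3 - a3*b2,
      a0*b2 - a1*b3 + a2*b0 + a3*b1,
      a0*b3 + a1*b2 - a2*b1 + a3*b0))"

definition qconj :: "quat \<Rightarrow> quat" where
  "qconj = (\<lambda>(a0,a1,a2,a3). (a0, -a1, -a2, -a3))"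

text \<open>An octonion a + b l is the pair (a,b) of quaternions; real basis
  1,i,j,k,l,il,jl,kl.\<close>
type_synonym oct = "quat \<times> quat"

definition omul :: "oct \<Rightarrow> oct \<Rightarrow> oct" where
  "omul = (\<lambda>(a,b) (c,d). (qmul a c - qmul d (qconj b), qmul (qconj a) d + qmul c b))"

definition oconj :: "oct \<Rightarrow> oct" where
  "oconj = (\<lambda>(a,b). (qconj a, - b))"

definition oone :: oct where
  "oone = ((1,0,0,0), 0)"

text \<open>The inner product: the octonion (1/2)(conj x * y + conj y * x) is real;
  we take its real part (coefficient of 1).\<close>
definition oinner :: "oct \<Rightarrow> oct \<Rightarrow> real" where
  "oinner x y = fst (fst ((1/2) *\<^sub>R (omul (oconj x) y + omul (oconj y) x)))"

definition onorm :: "oct \<Rightarrow> real" where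
  "onorm x = sqrt (oinner x x)"

definition ImO :: "oct set" where
  "ImO = {x. oinner x oone = 0}"

definition ocross :: "oct \<Rightarrow> oct \<Rightarrow> oct" where
  "ocross x y = (1/2) *\<^sub>R (omul (oconj y) x - omul (oconj x) y)"

text \<open>(x1,x2) represents x1 + sqrt(-1) x2.\<close>
type_synonym coct = "oct \<times> oct"

definition cscale :: "complex \<Rightarrow> coct \<Rightarrow> coct" where
  "cscale c = (\<lambda>(x1,x2). (Re c *\<^sub>R x1 - Im c *\<^sub>R x2, Re c *\<^sub>R x2 + Im c *\<^sub>R x1))"

definition cconj :: "coct \<Rightarrow> coct" where
  "cconj = (\<lambda>(x1,x2). (x1, - x2))"

definition emb :: "oct \<Rightarrow> coct" where
  "emb x = (x, 0)"

definition vd :: "(real \<Rightarrow> 'a::real_normed_vector) \<Rightarrow> real \<Rightarrow> 'a" where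
  "vd f s = vector_derivative f (at s)"

definition smooth_on :: "real set \<Rightarrow> (real \<Rightarrow> 'a::real_normed_vector) \<Rightarrow> bool" where
  "smooth_on J f \<longleftrightarrow> (\<exists>D :: nat \<Rightarrow> real \<Rightarrow> 'a. (\<forall>t\<in>J. D 0 t = f t) \<and>
      (\<forall>n. \<forall>t\<in>J. (D n has_vector_derivative D (Suc n) t) (at t)))"

definition sint :: "real \<Rightarrow> real \<Rightarrow> (real \<Rightarrow> real) \<Rightarrow> real" where
  "sint a b f = (if a \<le> b then integral {a..b} f else - integral {b..a} f)"

definition fI4 :: "(real \<Rightarrow> oct) \<Rightarrow> real \<Rightarrow> oct" where
  "fI4 \<gamma> = vd \<gamma>"

definition fk1 :: "(real \<Rightarrow> oct) \<Rightarrow> real \<Rightarrow> real" where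
  "fk1 \<gamma> s = onorm (vd (vd \<gamma>) s)"

definition fI1 :: "(real \<Rightarrow> oct) \<Rightarrow> real \<Rightarrow> oct" where
  "fI1 \<gamma> s = (1 / fk1 \<gamma> s) *\<^sub>R vd (fI4 \<gamma>) s"

definition fI5 :: "(real \<Rightarrow> oct) \<Rightarrow> real \<Rightarrow> oct" where
  "fI5 \<gamma> s = ocross (fI1 \<gamma> s) (fI4 \<gamma> s)"

definition fkappa2 :: "(real \<Rightarrow> oct) \<Rightarrow> real \<Rightarrow> real" where
  "fkappa2 \<gamma> s = sqrt ((onorm (vd (fI1 \<gamma>) s))\<^sup>2
      - (oinner (vd (fI1 \<gamma>) s) (fI4 \<gamma> s))\<^sup>2 - (oinner (vd (fI1 \<gamma>) s) (fI5 \<gamma> s))\<^sup>2)"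

text \<open>I2 in the case kappa2 > 0.\<close>
definition fI2pos :: "(real \<Rightarrow> oct) \<Rightarrow> real \<Rightarrow> oct" where
  "fI2pos \<gamma> s = (1 / fkappa2 \<gamma> s) *\<^sub>R (vd (fI1 \<gamma>) s
      - oinner (vd (fI1 \<gamma>) s) (fI4 \<gamma> s) *\<^sub>R fI4 \<gamma> s
      - oinner (vd (fI1 \<gamma>) s) (fI5 \<gamma> s) *\<^sub>R fI5 \<gamma> s)"

definition fI3 :: "(real \<Rightarrow> oct) \<Rightarrow> (real \<Rightarrow> oct) \<Rightarrow> real \<Rightarrow> oct" where
  "fI3 \<gamma> I2 s = ocross (fI1 \<gamma> s) (I2 s)"

definition fI6 :: "(real \<Rightarrow> oct) \<Rightarrow> (real \<Rightarrow> oct) \<Rightarrow> real \<Rightarrow> oct" where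
  "fI6 \<gamma> I2 s = ocross (I2 s) (fI4 \<gamma> s)"

definition fI7 :: "(real \<Rightarrow> oct) \<Rightarrow> (real \<Rightarrow> oct) \<Rightarrow> real \<Rightarrow> oct" where
  "fI7 \<gamma> I2 s = ocross (fI3 \<gamma> I2 s) (fI4 \<gamma> s)"

definition rho1 :: "(real \<Rightarrow> oct) \<Rightarrow> real \<Rightarrow> real" where
  "rho1 \<gamma> s = oinner (vd (fI1 \<gamma>) s) (fI5 \<gamma> s)"

definition rho2 :: "(real \<Rightarrow> oct) \<Rightarrow> (real \<Rightarrow> oct) \<Rightarrow> real \<Rightarrow> real" where
  "rho2 \<gamma> I2 s = oinner (vd I2 s) (fI6 \<gamma> I2 s)"

definition rho3 :: "(real \<Rightarrow> oct) \<Rightarrow> (real \<Rightarrow> oct) \<Rightarrow> real \<Rightarrow> real" where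
  "rho3 \<gamma> I2 s = oinner (vd (fI3 \<gamma> I2) s) (fI7 \<gamma> I2 s)"

definition galpha :: "(real \<Rightarrow> oct) \<Rightarrow> (real \<Rightarrow> oct) \<Rightarrow> real \<Rightarrow> real" where
  "galpha \<gamma> I2 s = oinner (vd I2 s) (fI3 \<gamma> I2 s)"

definition gbeta1 :: "(real \<Rightarrow> oct) \<Rightarrow> (real \<Rightarrow> oct) \<Rightarrow> real \<Rightarrow> real" where
  "gbeta1 \<gamma> I2 s = oinner (vd I2 s) (fI7 \<gamma> I2 s)"

definition gbeta2 :: "(real \<Rightarrow> oct) \<Rightarrow> (real \<Rightarrow> oct) \<Rightarrow> real \<Rightarrow> real" where
  "gbeta2 \<gamma> I2 s = oinner (vd (fI3 \<gamma> I2) s) (fI6 \<gamma> I2 s)"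

definition phase :: "(real \<Rightarrow> real) \<Rightarrow> real \<Rightarrow> complex" where
  "phase \<rho> s = complex_of_real (1 / sqrt 2) * exp (- \<i> * complex_of_real (sint 0 s \<rho>))"

definition cr :: "(real \<Rightarrow> oct) \<Rightarrow> real \<Rightarrow> complex" where
  "cr \<gamma> = phase (rho1 \<gamma>)"

definition cq :: "(real \<Rightarrow> oct) \<Rightarrow> (real \<Rightarrow> oct) \<Rightarrow> real \<Rightarrow> complex" where
  "cq \<gamma> I2 = phase (rho2 \<gamma> I2)"

definition cp :: "(real \<Rightarrow> oct) \<Rightarrow> (real \<Rightarrow> oct) \<Rightarrow> real \<Rightarrow> complex" where
  "cp \<gamma> I2 = phase (rho3 \<gamma> I2)"

definition ce4 :: "(real \<Rightarrow> oct) \<Rightarrow> real \<Rightarrow> coct" where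
  "ce4 \<gamma> s = emb (fI4 \<gamma> s)"

definition ce1 :: "(real \<Rightarrow> oct) \<Rightarrow> real \<Rightarrow> coct" where
  "ce1 \<gamma> s = cscale (cr \<gamma> s) (emb (fI1 \<gamma> s) - cscale \<i> (emb (fI5 \<gamma> s)))"

definition ce2 :: "(real \<Rightarrow> oct) \<Rightarrow> (real \<Rightarrow> oct) \<Rightarrow> real \<Rightarrow> coct" where
  "ce2 \<gamma> I2 s = cscale (cq \<gamma> I2 s) (emb (I2 s) - cscale \<i> (emb (fI6 \<gamma> I2 s)))"

definition ce3 :: "(real \<Rightarrow> oct) \<Rightarrow> (real \<Rightarrow> oct) \<Rightarrow> real \<Rightarrow> coct" where
  "ce3 \<gamma> I2 s = cscale (- cp \<gamma> I2 s) (emb (fI3 \<gamma> I2 s) - cscale \<i> (emb (fI7 \<gamma> I2 s)))"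

definition phi1 :: "(real \<Rightarrow> oct) \<Rightarrow> real \<Rightarrow> complex" where
  "phi1 \<gamma> s = complex_of_real (fk1 \<gamma> s) * cnj (cr \<gamma> s)"

definition phi2 :: "(real \<Rightarrow> oct) \<Rightarrow> (real \<Rightarrow> oct) \<Rightarrow> real \<Rightarrow> complex" where
  "phi2 \<gamma> I2 s = 2 * complex_of_real (fkappa2 \<gamma> s) * cr \<gamma> s * cnj (cq \<gamma> I2 s)"

definition phi3 :: "(real \<Rightarrow> oct) \<Rightarrow> (real \<Rightarrow> oct) \<Rightarrow> real \<Rightarrow> complex" where
  "phi3 \<gamma> I2 s = - complex_of_real (sqrt 2) * (cq \<gamma> I2 s)\<^sup>2 * cr \<gamma> s *
     (2 * complex_of_real (galpha \<gamma> I2 s)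
      + \<i> * complex_of_real (gbeta1 \<gamma> I2 s + gbeta2 \<gamma> I2 s))"

end

theory Submission
  imports Defs
begin


section \<open>Basic octonion algebra\<close>

lemma oinner_inner: "oinner x y = inner x y"
  by (simp add: oinner_def omul_def oconj_def qmul_def qconj_def inner_prod_def split_beta algebra_simps)

lemma onorm_norm: "onorm x = norm x"
  by (simp add: onorm_def oinner_inner norm_eq_sqrt_inner)

lemma inner_oone: "x \<bullet> oone = fst (fst x)"
  by (simp add: oone_def inner_prod_def split_beta)

lemma ImO_iff: "x \<in> ImO \<longleftrightarrow> x \<bullet> oone = 0"
  by (simp add: ImO_def oinner_inner)

lemma oone_inner_self: "oone \<bullet> oone = 1"
  by (simp add: oone_def inner_prod_def)

lemma oct_repr: obtains a0 a1 a2 a3 b0 b1 b2 b3 where "x = ((a0,a1,a2,a3),(b0,b1,b2,b3))"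
  by (metis prod.collapse)

lemma imag_repr: assumes "x \<in> ImO"
  obtains a1 a2 a3 b0 b1 b2 b3 where "x = ((0,a1,a2,a3),(b0,b1,b2,b3))"
proof -
  obtain a0 a1 a2 a3 b0 b1 b2 b3 where x: "x = ((a0,a1,a2,a3),(b0,b1,b2,b3))" by (rule oct_repr)
  with assms have "a0 = 0" by (simp add: ImO_iff inner_oone)
  with x that show ?thesis by blast
qed

lemma ocross_add_left: "ocross (x + y) z = ocross x z + ocross y z"
  by (simp add: ocross_def omul_def oconj_def qmul_def qconj_def split_beta algebra_simps)
lemma ocross_add_right: "ocross z (x + y) = ocross z x + ocross z y"
  by (simp add: ocross_def omul_def oconj_def qmul_def qconj_def split_beta algebra_simps)
lemma ocross_scaleR_left: "ocross (c *\<^sub>R x) z = c *\<^sub>R ocross x z"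
  by (simp add: ocross_def omul_def oconj_def qmul_def qconj_def split_beta algebra_simps)
lemma ocross_scaleR_right: "ocross z (c *\<^sub>R x) = c *\<^sub>R ocross z x"
  by (simp add: ocross_def omul_def oconj_def qmul_def qconj_def split_beta algebra_simps)

lemma bilinear_ocross: "bilinear ocross"
  unfolding bilinear_def linear_iff
  by (simp only: ocross_add_left ocross_add_right ocross_scaleR_left ocross_scaleR_right simp_thms all_simps)

lemma bounded_bilinear_ocross: "bounded_bilinear ocross"
  using bilinear_ocross bilinear_conv_bounded_bilinear by blast

lemmas ocross_diff_left = bounded_bilinear.diff_left[OF bounded_bilinear_ocross]
lemmas ocross_diff_right = bounded_bilinear.diff_right[OF bounded_bilinear_ocross]
lemmas ocross_minus_left = bounded_bilinear.minus_left[OF bounded_bilinear_ocross]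
lemmas ocross_minus_right = bounded_bilinear.minus_right[OF bounded_bilinear_ocross]
lemmas ocross_zero_left = bounded_bilinear.zero_left[OF bounded_bilinear_ocross]
lemmas ocross_zero_right = bounded_bilinear.zero_right[OF bounded_bilinear_ocross]

lemmas ocross_lin = ocross_add_left ocross_add_right ocross_scaleR_left ocross_scaleR_right
  ocross_diff_left ocross_diff_right ocross_minus_left ocross_minus_right ocross_zero_left ocross_zero_right

lemma ocross_anti: "ocross x y = - ocross y x"
  by (simp add: ocross_def omul_def oconj_def qmul_def qconj_def split_beta algebra_simps)

lemma ocross_self[simp]: "ocross x x = 0"
  by (simp add: ocross_def omul_def oconj_def qmul_def qconj_def split_beta algebra_simps zero_prod_def)

lemma ocross_Im: "ocross x y \<in> ImO"
  by (simp add: ImO_iff inner_oone ocross_def omul_def oconj_def qmul_def qconj_def split_beta algebra_simps)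

lemma C2_raw:
  fixes x1 x2 x3 x4 x5 x6 x7 y1 y2 y3 y4 y5 y6 y7 z1 z2 z3 z4 z5 z6 z7 :: real
  shows "ocross ((0,x1,x2,x3),(x4,x5,x6,x7)) ((0,y1,y2,y3),(y4,y5,y6,y7)) \<bullet> ((0,z1,z2,z3),(z4,z5,z6,z7))
       = ((0,x1,x2,x3),(x4,x5,x6,x7)) \<bullet> ocross ((0,y1,y2,y3),(y4,y5,y6,y7)) ((0,z1,z2,z3),(z4,z5,z6,z7))"
  by (simp add: ocross_def omul_def oconj_def qmul_def qconj_def inner_prod_def algebra_simps)

lemma C5_raw:
  fixes x1 x2 x3 x4 x5 x6 x7 y1 y2 y3 y4 y5 y6 y7 z1 z2 z3 z4 z5 z6 z7 :: real
  defines "x \<equiv> ((0,x1,x2,x3),(x4,x5,x6,x7))" and "y \<equiv> ((0,y1,y2,y3),(y4,y5,y6,y7))"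
    and "z \<equiv> ((0,z1,z2,z3),(z4,z5,z6,z7))"
  shows "ocross x (ocross y z) + ocross y (ocross x z) = (inner x z) *\<^sub>R y + (inner y z) *\<^sub>R x - (2 * inner x y) *\<^sub>R z"
  unfolding x_def y_def z_def
  by (simp add: ocross_def omul_def oconj_def qmul_def qconj_def inner_prod_def algebra_simps)

lemma C2: assumes "x \<in> ImO" "y \<in> ImO" "z \<in> ImO"
  shows "ocross x y \<bullet> z = x \<bullet> ocross y z"
  using assms by (elim imag_repr) (simp only: C2_raw)

lemma C5: assumes "x \<in> ImO" "y \<in> ImO" "z \<in> ImO"
  shows "ocross x (ocross y z) + ocross y (ocross x z) = (inner x z) *\<^sub>R y + (inner y z) *\<^sub>R x - (2 * inner x y) *\<^sub>R z"
  using assms by (elim imag_repr) (simp only: C5_raw)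

lemma cross_inner_left: assumes "x \<in> ImO" "y \<in> ImO" shows "ocross x y \<bullet> x = 0"
proof -
  have "ocross x y \<bullet> x = x \<bullet> ocross y x" using C2 assms by blast
  also have "\<dots> = - (ocross x y \<bullet> x)" by (metis ocross_anti inner_commute inner_minus_right)
  finally show ?thesis by simp
qed

lemma cross_inner_right: assumes "x \<in> ImO" "y \<in> ImO" shows "ocross x y \<bullet> y = 0"
  using C2[OF assms assms(2)] by simp

lemma C3: assumes "x \<in> ImO" "y \<in> ImO"
  shows "ocross x (ocross x y) = (x \<bullet> y) *\<^sub>R x - (x \<bullet> x) *\<^sub>R y"
proof -
  have e: "ocross x (ocross x y) + ocross x (ocross x y) = (x \<bullet> y) *\<^sub>R x + (x \<bullet> y) *\<^sub>R x - (2 * (x \<bullet> x)) *\<^sub>R y"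
    using C5[OF assms(1) assms(1) assms(2)] by simp
  have "ocross x (ocross x y) = (1/2) *\<^sub>R (ocross x (ocross x y) + ocross x (ocross x y))"
    by (simp add: scaleR_2[symmetric])
  also have "\<dots> = (1/2) *\<^sub>R ((x \<bullet> y) *\<^sub>R x + (x \<bullet> y) *\<^sub>R x - (2 * (x \<bullet> x)) *\<^sub>R y)" by (simp only: e)
  also have "\<dots> = (x \<bullet> y) *\<^sub>R x - (x \<bullet> x) *\<^sub>R y" by (simp add: scaleR_2[symmetric] algebra_simps)
  finally show ?thesis .
qed

lemma G1: assumes "x \<in> ImO" "y \<in> ImO" "z \<in> ImO"
  shows "ocross x y \<bullet> ocross x z = (x \<bullet> x) * (y \<bullet> z) - (x \<bullet> y) * (x \<bullet> z)"
proof -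
  have "ocross x y \<bullet> ocross x z = - (ocross y x \<bullet> ocross x z)" by (metis ocross_anti inner_minus_left)
  also have "\<dots> = - (y \<bullet> ocross x (ocross x z))" using C2 assms ocross_Im by metis
  also have "\<dots> = (x \<bullet> x) * (y \<bullet> z) - (x \<bullet> y) * (x \<bullet> z)"
    unfolding C3[OF assms(1,3)] by (simp add: algebra_simps inner_commute)
  finally show ?thesis .
qed

lemma C4: assumes "x \<in> ImO" "y \<in> ImO" "z \<in> ImO"
  shows "ocross (ocross x y) z = - ocross x (ocross y z) + (2 * (x \<bullet> z)) *\<^sub>R y - (x \<bullet> y) *\<^sub>R z - (y \<bullet> z) *\<^sub>R x"
proof -
  have e: "ocross z (ocross x y) + ocross x (ocross z y) = (z \<bullet> y) *\<^sub>R x + (x \<bullet> y) *\<^sub>R z - (2 * (z \<bullet> x)) *\<^sub>R y"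
    using C5[OF assms(3) assms(1) assms(2)] .
  have "ocross (ocross x y) z = - ocross z (ocross x y)" by (rule ocross_anti)
  also have "\<dots> = ocross x (ocross z y) - (z \<bullet> y) *\<^sub>R x - (x \<bullet> y) *\<^sub>R z + (2 * (z \<bullet> x)) *\<^sub>R y"
    using e by (simp add: algebra_simps)
  also have "ocross x (ocross z y) = - ocross x (ocross y z)" by (metis ocross_anti ocross_minus_right)
  finally show ?thesis by (simp add: algebra_simps inner_commute)
qed


lemma G1': assumes "x \<in> ImO" "y \<in> ImO" "z \<in> ImO"
  shows "ocross y x \<bullet> ocross z x = (x \<bullet> x) * (y \<bullet> z) - (x \<bullet> y) * (x \<bullet> z)"
  using G1[OF assms] ocross_anti[of y x] ocross_anti[of z x] by simp

lemma flip_inner: "a \<bullet> b = c \<Longrightarrow> b \<bullet> a = c" by (simp add: inner_commute)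

declare ocross_zero_left[simp] ocross_zero_right[simp]

lemma ImO_inner_oone: "x \<in> ImO \<Longrightarrow> oone \<bullet> x = 0"
  by (simp add: ImO_iff inner_commute)

context
  fixes u v w I3 I5 I6 I7 :: oct
  assumes Iu: "u \<in> ImO" and Iv: "v \<in> ImO" and Iw: "w \<in> ImO"
   and nu: "u \<bullet> u = 1" and nv: "v \<bullet> v = 1" and nw: "w \<bullet> w = 1"
   and ouv: "u \<bullet> v = 0" and ouw: "u \<bullet> w = 0" and ovw: "v \<bullet> w = 0"
   and phi: "v \<bullet> ocross u w = 0"
   and d3: "I3 = ocross u v" and d5: "I5 = ocross u w" and d6: "I6 = ocross v w" and d7: "I7 = ocross I3 w"
begin

lemma fr_Im: "I3 \<in> ImO" "I5 \<in> ImO" "I6 \<in> ImO" "I7 \<in> ImO"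
  by (simp_all add: d3 d5 d6 d7 ocross_Im)

lemma phi2: "I3 \<bullet> w = 0"
proof -
  have "I3 \<bullet> w = u \<bullet> ocross v w" using C2[OF Iu Iv Iw] d3 by simp
  also have "\<dots> = - (u \<bullet> ocross w v)" using ocross_anti[of v w] by simp
  also have "u \<bullet> ocross w v = ocross u w \<bullet> v" using C2[OF Iu Iw Iv] by simp
  finally show ?thesis using phi by (simp add: inner_commute)
qed

lemma phi3: "u \<bullet> I6 = 0"
  using C2[OF Iu Iv Iw] phi2 d3 d6 by simp

lemma I7_alt: "I7 = - ocross u I6"
  using C4[OF Iu Iv Iw] d7 d3 d6 ouv ouw ovw by simp

lemmas I3I = fr_Im(1) and I5I = fr_Im(2) and I6I = fr_Im(3) and I7I = fr_Im(4)

lemma on_u: "u \<bullet> I3 = 0" "u \<bullet> I5 = 0" "u \<bullet> I7 = 0"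
proof -
  show "u \<bullet> I3 = 0" using cross_inner_left[OF Iu Iv] d3 by (simp add: inner_commute)
  show "u \<bullet> I5 = 0" using cross_inner_left[OF Iu Iw] d5 by (simp add: inner_commute)
  show "u \<bullet> I7 = 0" using cross_inner_left[OF Iu I6I] I7_alt by (simp add: inner_commute)
qed

lemma on_v: "v \<bullet> I3 = 0" "v \<bullet> I5 = 0" "v \<bullet> I6 = 0" "v \<bullet> I7 = 0"
proof -
  show "v \<bullet> I3 = 0" using cross_inner_right[OF Iu Iv] d3 by (simp add: inner_commute)
  show "v \<bullet> I5 = 0" using phi d5 by simp
  show "v \<bullet> I6 = 0" using cross_inner_left[OF Iv Iw] d6 by (simp add: inner_commute)
  have "I7 \<bullet> v = I3 \<bullet> ocross w v" using C2[OF I3I Iw Iv] d7 by simp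
  also have "\<dots> = - (ocross u v \<bullet> ocross v w)" using d3 ocross_anti[of w v] by simp
  also have "\<dots> = ocross v u \<bullet> ocross v w" using ocross_anti[of u v] by simp
  also have "\<dots> = 0" using G1[OF Iv Iu Iw] ouw ouv by (simp add: inner_commute)
  finally show "v \<bullet> I7 = 0" by (simp add: inner_commute)
qed

lemma on_3: "I3 \<bullet> I3 = 1" "I3 \<bullet> I5 = 0" "I3 \<bullet> I6 = 0" "I3 \<bullet> I7 = 0"
proof -
  show "I3 \<bullet> I3 = 1" using G1[OF Iu Iv Iv] d3 nu nv ouv by simp
  show "I3 \<bullet> I5 = 0" using G1[OF Iu Iv Iw] d3 d5 ouv ovw by simp
  have "I3 \<bullet> I6 = - (ocross v u \<bullet> ocross v w)" using d3 d6 ocross_anti[of u v] by simp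
  then show "I3 \<bullet> I6 = 0" using G1[OF Iv Iu Iw] ouw ouv by (simp add: inner_commute)
  show "I3 \<bullet> I7 = 0" using cross_inner_left[OF I3I Iw] d7 by (simp add: inner_commute)
qed

lemma on_w: "w \<bullet> I5 = 0" "w \<bullet> I6 = 0" "w \<bullet> I7 = 0"
proof -
  show "w \<bullet> I5 = 0" using cross_inner_right[OF Iu Iw] d5 by (simp add: inner_commute)
  show "w \<bullet> I6 = 0" using cross_inner_right[OF Iv Iw] d6 by (simp add: inner_commute)
  show "w \<bullet> I7 = 0" using cross_inner_right[OF I3I Iw] d7 by (simp add: inner_commute)
qed

lemma on_5: "I5 \<bullet> I5 = 1" "I5 \<bullet> I6 = 0" "I5 \<bullet> I7 = 0"
proof -
  show "I5 \<bullet> I5 = 1" using G1[OF Iu Iw Iw] d5 nu nw ouw by simp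
  show "I5 \<bullet> I6 = 0" using G1'[OF Iw Iu Iv] d5 d6 ouw ovw ouv by (simp add: inner_commute)
  show "I5 \<bullet> I7 = 0" using G1'[OF Iw Iu I3I] d5 d7 ouw on_u phi2 by (simp add: inner_commute)
qed

lemma on_6: "I6 \<bullet> I6 = 1" "I6 \<bullet> I7 = 0"
proof -
  show "I6 \<bullet> I6 = 1" using G1[OF Iv Iw Iw] d6 nv nw ovw by simp
  show "I6 \<bullet> I7 = 0" using G1'[OF Iw Iv I3I] d6 d7 ovw on_v phi2 by (simp add: inner_commute)
qed

lemma on_7: "I7 \<bullet> I7 = 1"
  using G1[OF I3I Iw Iw] d7 on_3 nw phi2 by simp

lemmas on_all0 = nu nv nw ouv ouw ovw on_u on_v on_3 on_w on_5 on_6 on_7 phi2 phi3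
lemmas on_oo = ImO_inner_oone[OF Iu] ImO_inner_oone[OF Iv] ImO_inner_oone[OF Iw] ImO_inner_oone[OF I3I]
  ImO_inner_oone[OF I5I] ImO_inner_oone[OF I6I] ImO_inner_oone[OF I7I]
lemmas on_all = on_all0 on_all0[THEN flip_inner] on_oo on_oo[THEN flip_inner] oone_inner_self

lemma table:
  "ocross u w = I5" "ocross v w = I6" "ocross I3 w = I7" "ocross u v = I3"
  "ocross I5 w = - u" "ocross I6 w = - v" "ocross I7 w = - I3" "ocross w v = - I6"
  "ocross I5 v = - I7" "ocross u I3 = - v" "ocross u I6 = - I7" "ocross u I7 = I6"
  "ocross v u = - I3" "ocross I3 u = v" "ocross w u = - I5" "ocross w I3 = - I7"
proof -
  show a: "ocross u w = I5" "ocross v w = I6" "ocross I3 w = I7" "ocross u v = I3"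
    using d5 d6 d7 d3 by simp_all
  show "ocross I5 w = - u" using C4[OF Iu Iw Iw] d5 nw ouw by simp
  show "ocross I6 w = - v" using C4[OF Iv Iw Iw] d6 nw ovw by simp
  show "ocross I7 w = - I3" using C4[OF I3I Iw Iw] d7 nw phi2 by simp
  show "ocross w v = - I6" using d6 ocross_anti[of w v] by simp
  have "ocross I5 v = - ocross u (ocross w v)" using C4[OF Iu Iw Iv] d5 ouv ouw ovw by (simp add: inner_commute)
  also have "\<dots> = ocross u I6" using d6 ocross_anti[of w v] by (simp add: ocross_minus_right)
  finally show "ocross I5 v = - I7" using I7_alt by simp
  show "ocross u I3 = - v" using C3[OF Iu Iv] d3 nu ouv by simp
  show "ocross u I6 = - I7" using I7_alt by simp
  show "ocross u I7 = I6" using C3[OF Iu I6I] I7_alt nu phi3 by (simp add: ocross_minus_right)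
  show "ocross v u = - I3" using d3 ocross_anti[of v u] by simp
  have "ocross I3 u = - ocross u I3" by (rule ocross_anti)
  then show "ocross I3 u = v" using C3[OF Iu Iv] d3 nu ouv by simp
  show "ocross w u = - I5" using d5 ocross_anti[of w u] by simp
  show "ocross w I3 = - I7" using d7 ocross_anti[of w I3] by simp
qed

lemma span8:
  assumes "x \<bullet> oone = y \<bullet> oone" "x \<bullet> u = y \<bullet> u" "x \<bullet> v = y \<bullet> v" "x \<bullet> I3 = y \<bullet> I3"
    "x \<bullet> w = y \<bullet> w" "x \<bullet> I5 = y \<bullet> I5" "x \<bullet> I6 = y \<bullet> I6" "x \<bullet> I7 = y \<bullet> I7"
  shows "x = y"
proof -
  define L where "L = [oone, u, v, I3, w, I5, I6, I7]"
  define B where "B = set L"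
  have neq: "\<And>a b. a \<bullet> b = 0 \<Longrightarrow> a \<bullet> a = 1 \<Longrightarrow> a \<noteq> b" by auto
  have dist: "distinct L"
    unfolding L_def by (simp; intro conjI; rule neq; simp add: on_all)
  have cardB: "card B = 8" unfolding B_def using distinct_card[OF dist] by (simp add: L_def)
  have po: "pairwise orthogonal B"
    unfolding pairwise_def B_def L_def orthogonal_def by (simp add: on_all)
  have n1: "\<forall>a \<in> B. a \<bullet> a = 1" unfolding B_def L_def by (simp add: on_all)
  have nz: "0 \<notin> B"
  proof
    assume "0 \<in> B"
    then have "(0::oct) \<bullet> 0 = 1" using n1 by blast
    then show False by simp
  qed
  have ind: "independent B" by (rule pairwise_orthogonal_independent[OF po nz])
  have dimU: "dim (UNIV :: oct set) = 8" by simp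
  have "(UNIV :: oct set) \<subseteq> span B"
    using card_eq_dim[of B UNIV] ind cardB dimU by (simp add: B_def)
  then have "x - y \<in> span B" by auto
  moreover have "\<forall>b \<in> B. orthogonal (x - y) b"
    unfolding B_def L_def orthogonal_def using assms by (simp add: inner_diff_left)
  ultimately have "orthogonal (x - y) (x - y)" using orthogonal_to_span[of "x - y" B "x - y"] by blast
  then have "(x - y) \<bullet> (x - y) = 0" by (simp only: orthogonal_def)
  then show ?thesis by simp
qed

end


section \<open>Finite-order smoothness\<close>

fun Ck :: "nat \<Rightarrow> real set \<Rightarrow> (real \<Rightarrow> 'a::real_normed_vector) \<Rightarrow> bool" where
  "Ck 0 J f = continuous_on J f"
| "Ck (Suc n) J f = (\<exists>f'. (\<forall>t\<in>J. (f has_vector_derivative f' t) (at t)) \<and> Ck n J f')"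

definition sm :: "real set \<Rightarrow> (real \<Rightarrow> 'a::real_normed_vector) \<Rightarrow> bool" where
  "sm J f \<longleftrightarrow> (\<forall>n. Ck n J f)"

lemma deriv_cont_on: "(\<forall>t\<in>J. (f has_vector_derivative f' t) (at t)) \<Longrightarrow> continuous_on J f"
  by (meson continuous_at_imp_continuous_on has_vector_derivative_continuous)

lemma Ck_Suc_D: "Ck (Suc n) J f \<Longrightarrow> Ck n J f"
proof (induction n arbitrary: f)
  case 0
  then obtain f' where "\<forall>t\<in>J. (f has_vector_derivative f' t) (at t)" by auto
  then show ?case using deriv_cont_on by auto
next
  case (Suc n)
  then obtain f' where d: "\<forall>t\<in>J. (f has_vector_derivative f' t) (at t)" and c: "Ck (Suc n) J f'" by auto
  with Suc.IH[OF c] show ?case by auto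
qed

lemma Ck_cong: assumes "open J" "\<And>t. t \<in> J \<Longrightarrow> f t = g t" "Ck n J f" shows "Ck n J g"
proof (cases n)
  case 0 then show ?thesis using assms continuous_on_cong by fastforce
next
  case (Suc m)
  then obtain f' where d: "\<forall>t\<in>J. (f has_vector_derivative f' t) (at t)" and c: "Ck m J f'" using assms by auto
  have "\<forall>t\<in>J. (g has_vector_derivative f' t) (at t)"
    using d assms(1,2) has_vector_derivative_transform_within_open by metis
  then show ?thesis using c Suc by auto
qed

lemma Ck_deriv: assumes "open J" "Ck (Suc n) J f" "t \<in> J"
  shows "(f has_vector_derivative vd f t) (at t)"
proof -
  obtain f' where d: "\<forall>t\<in>J. (f has_vector_derivative f' t) (at t)" using assms by auto
  then have "vd f t = f' t" using assms(3) by (simp add: vd_def vector_derivative_at)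
  then show ?thesis using d assms(3) by simp
qed

lemma Ck_vd: assumes "open J" "Ck (Suc n) J f" shows "Ck n J (vd f)"
proof -
  obtain f' where d: "\<forall>t\<in>J. (f has_vector_derivative f' t) (at t)" and c: "Ck n J f'" using assms by auto
  have "f' t = vd f t" if "t \<in> J" for t
  proof -
    have "(f has_vector_derivative f' t) (at t)" using d that by blast
    then show ?thesis by (simp add: vd_def vector_derivative_at)
  qed
  then show ?thesis using Ck_cong[OF assms(1) _ c] by blast
qed

lemma sm_cong: "open J \<Longrightarrow> (\<And>t. t \<in> J \<Longrightarrow> f t = g t) \<Longrightarrow> sm J f \<Longrightarrow> sm J g"
  unfolding sm_def using Ck_cong by blast

lemma sm_vd: "open J \<Longrightarrow> sm J f \<Longrightarrow> sm J (vd f)"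
  unfolding sm_def using Ck_vd by blast

lemma sm_deriv: "open J \<Longrightarrow> sm J f \<Longrightarrow> t \<in> J \<Longrightarrow> (f has_vector_derivative vd f t) (at t)"
  unfolding sm_def using Ck_deriv by blast

lemma sm_cont: "sm J f \<Longrightarrow> continuous_on J f"
  unfolding sm_def using Ck.simps(1) by blast

lemma smooth_on_sm: assumes "open J" "smooth_on J f" shows "sm J f"
proof -
  obtain D :: "nat \<Rightarrow> real \<Rightarrow> 'a" where D0: "\<forall>t\<in>J. D 0 t = f t"
    and Dn: "\<forall>n. \<forall>t\<in>J. (D n has_vector_derivative D (Suc n) t) (at t)"
    using assms(2) unfolding smooth_on_def by blast
  have "\<forall>k. Ck n J (D k)" for n
  proof (induction n)
    case 0 then show ?case using Dn deriv_cont_on by fastforce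
  next
    case (Suc n) then show ?case using Dn by fastforce
  qed
  then show ?thesis unfolding sm_def using Ck_cong[OF assms(1)] D0 by metis
qed

lemma Ck_const: "Ck n J (\<lambda>t. c)"
proof (induction n arbitrary: c)
  case 0 then show ?case by simp
next
  case (Suc n) then show ?case by (auto intro!: exI[of _ "\<lambda>t. 0"])
qed

lemma Ck_add: "Ck n J f \<Longrightarrow> Ck n J g \<Longrightarrow> Ck n J (\<lambda>t. f t + g t)"
proof (induction n arbitrary: f g)
  case 0 then show ?case by (simp add: continuous_on_add)
next
  case (Suc n)
  then obtain f' g' where df: "\<forall>t\<in>J. (f has_vector_derivative f' t) (at t)" and cf: "Ck n J f'"
    and dg: "\<forall>t\<in>J. (g has_vector_derivative g' t) (at t)" and cg: "Ck n J g'" by auto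
  have "\<forall>t\<in>J. ((\<lambda>t. f t + g t) has_vector_derivative (\<lambda>t. f' t + g' t) t) (at t)"
    using df dg by (auto intro!: has_vector_derivative_add)
  then show ?case using Suc.IH[OF cf cg] by auto
qed

lemma Ck_minus: "Ck n J f \<Longrightarrow> Ck n J (\<lambda>t. - f t)"
proof (induction n arbitrary: f)
  case 0 then show ?case by (simp add: continuous_on_minus)
next
  case (Suc n)
  then obtain f' where df: "\<forall>t\<in>J. (f has_vector_derivative f' t) (at t)" and cf: "Ck n J f'" by auto
  have "\<forall>t\<in>J. ((\<lambda>t. - f t) has_vector_derivative (\<lambda>t. - f' t) t) (at t)"
    using df by (auto intro!: has_vector_derivative_minus)
  then show ?case using Suc.IH[OF cf] by auto
qed

lemma Ck_bil: fixes pr :: "'a::real_normed_vector \<Rightarrow> 'b::real_normed_vector \<Rightarrow> 'c::real_normed_vector"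
  assumes bb: "bounded_bilinear pr"
  shows "Ck n J f \<Longrightarrow> Ck n J g \<Longrightarrow> Ck n J (\<lambda>t. pr (f t) (g t))"
proof (induction n arbitrary: f g)
  case 0 then show ?case by (simp add: bounded_bilinear.continuous_on[OF bb])
next
  case (Suc n)
  then obtain f' g' where df: "\<forall>t\<in>J. (f has_vector_derivative f' t) (at t)" and cf: "Ck n J f'"
    and dg: "\<forall>t\<in>J. (g has_vector_derivative g' t) (at t)" and cg: "Ck n J g'" by auto
  have f0: "Ck n J f" and g0: "Ck n J g" using Suc.prems Ck_Suc_D by blast+
  have "\<forall>t\<in>J. ((\<lambda>t. pr (f t) (g t)) has_vector_derivative (\<lambda>t. pr (f t) (g' t) + pr (f' t) (g t)) t) (at t)"
    using df dg by (auto intro!: bounded_bilinear.has_vector_derivative[OF bb])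
  moreover have "Ck n J (\<lambda>t. pr (f t) (g' t) + pr (f' t) (g t))"
    using Ck_add[OF Suc.IH[OF f0 cg] Suc.IH[OF cf g0]] .
  ultimately show ?case by auto
qed

lemma Ck_inverse: "Ck n J f \<Longrightarrow> (\<forall>t\<in>J. f t \<noteq> (0::real)) \<Longrightarrow> Ck n J (\<lambda>t. inverse (f t))"
proof (induction n arbitrary: f)
  case 0 then show ?case by (simp add: continuous_on_inverse)
next
  case (Suc n)
  then obtain f' where df: "\<forall>t\<in>J. (f has_vector_derivative f' t) (at t)" and cf: "Ck n J f'" by auto
  have f0: "Ck n J f" using Suc.prems Ck_Suc_D by blast
  define F where "F = (\<lambda>t. - (f' t * (inverse (f t) * inverse (f t))))"
  have D: "\<forall>t\<in>J. ((\<lambda>t. inverse (f t)) has_vector_derivative F t) (at t)"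
  proof
    fix t assume t: "t \<in> J"
    have "(f has_real_derivative f' t) (at t)" using df t has_real_derivative_iff_has_vector_derivative by blast
    from DERIV_inverse_fun[OF this] Suc.prems(2) t
    have "((\<lambda>t. inverse (f t)) has_real_derivative - (f' t * inverse (f t ^ Suc (Suc 0)))) (at t)" by blast
    then show "((\<lambda>t. inverse (f t)) has_vector_derivative F t) (at t)"
      by (simp add: F_def has_real_derivative_iff_has_vector_derivative power2_eq_square)
  qed
  have a: "Ck n J (\<lambda>t. inverse (f t))" using Suc.IH[OF f0] Suc.prems(2) by blast
  have b: "Ck n J (\<lambda>t. inverse (f t) * inverse (f t))" using Ck_bil[OF bounded_bilinear_mult a a] .
  have c: "Ck n J (\<lambda>t. f' t * (inverse (f t) * inverse (f t)))" using Ck_bil[OF bounded_bilinear_mult cf b] .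
  have "Ck n J F" unfolding F_def using Ck_minus[OF c] .
  then show ?case using D by (simp only: Ck.simps) blast
qed

lemma Ck_sqrt: "Ck n J f \<Longrightarrow> (\<forall>t\<in>J. f t > (0::real)) \<Longrightarrow> Ck n J (\<lambda>t. sqrt (f t))"
proof (induction n arbitrary: f)
  case 0 then show ?case by (simp add: continuous_on_real_sqrt)
next
  case (Suc n)
  then obtain f' where df: "\<forall>t\<in>J. (f has_vector_derivative f' t) (at t)" and cf: "Ck n J f'" by auto
  have f0: "Ck n J f" using Suc.prems Ck_Suc_D by blast
  define F where "F = (\<lambda>t. f' t * (inverse (sqrt (f t)) * (1/2)))"
  have D: "\<forall>t\<in>J. ((\<lambda>t. sqrt (f t)) has_vector_derivative F t) (at t)"
  proof
    fix t assume t: "t \<in> J"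
    have "(f has_real_derivative f' t) (at t)" using df t has_real_derivative_iff_has_vector_derivative by blast
    from DERIV_chain2[OF DERIV_real_sqrt this] Suc.prems(2) t
    have "((\<lambda>t. sqrt (f t)) has_real_derivative inverse (sqrt (f t)) / 2 * f' t) (at t)" by blast
    then show "((\<lambda>t. sqrt (f t)) has_vector_derivative F t) (at t)"
      by (simp add: F_def has_real_derivative_iff_has_vector_derivative mult.commute)
  qed
  have a: "Ck n J (\<lambda>t. sqrt (f t))" using Suc.IH[OF f0] Suc.prems(2) by blast
  have "\<forall>t\<in>J. sqrt (f t) \<noteq> 0" using Suc.prems(2) by (metis order_less_irrefl real_sqrt_eq_zero_cancel_iff)
  then have b: "Ck n J (\<lambda>t. inverse (sqrt (f t)))" using Ck_inverse[OF a] by blast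
  have c: "Ck n J (\<lambda>t. inverse (sqrt (f t)) * (1/2))" using Ck_bil[OF bounded_bilinear_mult b Ck_const] .
  have "Ck n J F" unfolding F_def using Ck_bil[OF bounded_bilinear_mult cf c] .
  then show ?case using D by (simp only: Ck.simps) blast
qed

lemma sm_const: "sm J (\<lambda>t. c)" unfolding sm_def using Ck_const by blast
lemma sm_add: "sm J f \<Longrightarrow> sm J g \<Longrightarrow> sm J (\<lambda>t. f t + g t)" unfolding sm_def using Ck_add by blast
lemma sm_minus: "sm J f \<Longrightarrow> sm J (\<lambda>t. - f t)" unfolding sm_def using Ck_minus by blast
lemma sm_diff: "sm J f \<Longrightarrow> sm J g \<Longrightarrow> sm J (\<lambda>t. f t - g t)"
  using sm_add[of J f "\<lambda>t. - g t"] sm_minus[of J g] by simp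
lemma sm_bil: fixes pr :: "'a::real_normed_vector \<Rightarrow> 'b::real_normed_vector \<Rightarrow> 'c::real_normed_vector"
  shows "bounded_bilinear pr \<Longrightarrow> sm J f \<Longrightarrow> sm J g \<Longrightarrow> sm J (\<lambda>t. pr (f t) (g t))"
  unfolding sm_def using Ck_bil by blast
lemma sm_inverse: "sm J f \<Longrightarrow> (\<forall>t\<in>J. f t \<noteq> (0::real)) \<Longrightarrow> sm J (\<lambda>t. inverse (f t))"
  unfolding sm_def using Ck_inverse by blast
lemma sm_sqrt: "sm J f \<Longrightarrow> (\<forall>t\<in>J. f t > (0::real)) \<Longrightarrow> sm J (\<lambda>t. sqrt (f t))"
  unfolding sm_def using Ck_sqrt by blast

lemmas sm_scaleR = sm_bil[OF bounded_bilinear_scaleR]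
lemmas sm_mult = sm_bil[OF bounded_bilinear_mult]
lemmas sm_inner = sm_bil[OF bounded_bilinear_inner]
lemmas sm_ocross = sm_bil[OF bounded_bilinear_ocross]

lemma inner_const_deriv:
  assumes "open J" "t \<in> J" "(f has_vector_derivative f') (at t)" "(g has_vector_derivative g') (at t)"
    "\<forall>u\<in>J. f u \<bullet> g u = c"
  shows "f' \<bullet> g t + f t \<bullet> g' = 0"
proof -
  have d1: "((\<lambda>u. f u \<bullet> g u) has_vector_derivative (f t \<bullet> g' + f' \<bullet> g t)) (at t)"
    using bounded_bilinear.has_vector_derivative[OF bounded_bilinear_inner assms(3,4)] .
  have c0: "((\<lambda>u. c) has_vector_derivative 0) (at t)" by simp
  have eq: "\<And>y. y \<in> J \<Longrightarrow> c = f y \<bullet> g y" using assms(5) by simp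
  have d2: "((\<lambda>u. f u \<bullet> g u) has_vector_derivative 0) (at t)"
    by (rule has_vector_derivative_transform_within_open[OF c0 assms(1) assms(2) eq])
  show ?thesis using vector_derivative_unique_at[OF d1 d2] by simp
qed


lemma sm_eqI: "sm J f \<Longrightarrow> (\<And>t. f t = g t) \<Longrightarrow> sm J g"
proof -
  assume "sm J f" "\<And>t. f t = g t"
  moreover have "f = g" using \<open>\<And>t. f t = g t\<close> by (rule ext)
  ultimately show ?thesis by simp
qed

lemma inner_self_norm: "x \<bullet> x = (norm x)\<^sup>2"
  by (simp add: power2_norm_eq_inner)

locale curve =
  fixes \<gamma> :: "real \<Rightarrow> oct" and J :: "real set"
  assumes Jo: "open J" and smg: "sm J \<gamma>" and im: "\<forall>s\<in>J. \<gamma> s \<in> ImO"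
    and us: "\<forall>s\<in>J. norm (vd \<gamma> s) = 1" and k1p: "\<forall>s\<in>J. fk1 \<gamma> s > 0"
begin

lemma k1pos: "t \<in> J \<Longrightarrow> fk1 \<gamma> t > 0" using k1p by blast

lemma sm4: "sm J (fI4 \<gamma>)" using sm_vd[OF Jo smg] by (simp add: fI4_def)

lemma d4: "t \<in> J \<Longrightarrow> (fI4 \<gamma> has_vector_derivative vd (fI4 \<gamma>) t) (at t)"
  using sm_deriv[OF Jo sm4] .

lemma dg: "t \<in> J \<Longrightarrow> (\<gamma> has_vector_derivative fI4 \<gamma> t) (at t)"
  using sm_deriv[OF Jo smg] by (simp add: fI4_def)

lemma k1_eq: "fk1 \<gamma> t = norm (vd (fI4 \<gamma>) t)"
  by (simp add: fk1_def fI4_def onorm_norm)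

lemma V4_pos: "t \<in> J \<Longrightarrow> vd (fI4 \<gamma>) t \<bullet> vd (fI4 \<gamma>) t > 0"
  using k1p k1_eq by (metis inner_gt_zero_iff norm_zero order_less_irrefl)

lemma smk1: "sm J (fk1 \<gamma>)"
proof -
  have "sm J (\<lambda>t. sqrt (vd (fI4 \<gamma>) t \<bullet> vd (fI4 \<gamma>) t))"
    using sm_sqrt[OF sm_inner[OF sm_vd[OF Jo sm4] sm_vd[OF Jo sm4]]] V4_pos by simp
  then show ?thesis by (rule sm_eqI) (simp add: k1_eq norm_eq_sqrt_inner)
qed

lemma I1_eq: "fI1 \<gamma> t = inverse (fk1 \<gamma> t) *\<^sub>R vd (fI4 \<gamma>) t"
  by (simp add: fI1_def inverse_eq_divide)

lemma sm1: "sm J (fI1 \<gamma>)"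
proof -
  have "\<forall>t\<in>J. fk1 \<gamma> t \<noteq> 0" using k1p by (metis order_less_irrefl)
  then have ki: "sm J (\<lambda>t. inverse (fk1 \<gamma> t))" by (rule sm_inverse[OF smk1])
  have "sm J (\<lambda>t. inverse (fk1 \<gamma> t) *\<^sub>R vd (fI4 \<gamma>) t)"
    using sm_scaleR[OF ki sm_vd[OF Jo sm4]] .
  then show ?thesis by (rule sm_eqI) (simp add: I1_eq)
qed

lemma sm5: "sm J (fI5 \<gamma>)"
  using sm_ocross[OF sm1 sm4] by (rule sm_eqI) (simp add: fI5_def)

lemma vd4: assumes t: "t \<in> J" shows "vd (fI4 \<gamma>) t = fk1 \<gamma> t *\<^sub>R fI1 \<gamma> t"
proof -
  have "fk1 \<gamma> t \<noteq> 0" using k1p t by (metis order_less_irrefl)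
  then show ?thesis by (simp add: I1_eq)
qed

lemma d1: "t \<in> J \<Longrightarrow> (fI1 \<gamma> has_vector_derivative vd (fI1 \<gamma>) t) (at t)"
  using sm_deriv[OF Jo sm1] .

lemma d5: "t \<in> J \<Longrightarrow> (fI5 \<gamma> has_vector_derivative vd (fI5 \<gamma>) t) (at t)"
  using sm_deriv[OF Jo sm5] .

lemma Im4: assumes t: "t \<in> J" shows "fI4 \<gamma> t \<in> ImO"
proof -
  have "\<forall>u\<in>J. \<gamma> u \<bullet> (\<lambda>_. oone) u = 0" using im by (simp add: ImO_iff)
  from inner_const_deriv[OF Jo t dg[OF t] has_vector_derivative_const this]
  show ?thesis by (simp add: ImO_iff)
qed

lemma n4: "t \<in> J \<Longrightarrow> fI4 \<gamma> t \<bullet> fI4 \<gamma> t = 1"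
  using us by (simp add: fI4_def inner_self_norm)

lemma o41: assumes t: "t \<in> J" shows "fI4 \<gamma> t \<bullet> fI1 \<gamma> t = 0"
proof -
  have "\<forall>u\<in>J. fI4 \<gamma> u \<bullet> fI4 \<gamma> u = 1" using n4 by blast
  from inner_const_deriv[OF Jo t d4[OF t] d4[OF t] this]
  have "2 * (fk1 \<gamma> t * (fI4 \<gamma> t \<bullet> fI1 \<gamma> t)) = 0" by (simp add: vd4[OF t] inner_commute)
  then show ?thesis using k1pos[OF t] by simp
qed

lemma Im1: assumes t: "t \<in> J" shows "fI1 \<gamma> t \<in> ImO"
proof -
  have "\<forall>u\<in>J. fI4 \<gamma> u \<bullet> (\<lambda>_. oone) u = 0" using Im4 by (simp add: ImO_iff)
  from inner_const_deriv[OF Jo t d4[OF t] has_vector_derivative_const this]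
  have "fk1 \<gamma> t * (fI1 \<gamma> t \<bullet> oone) = 0" by (simp add: vd4[OF t])
  then show ?thesis using k1pos[OF t] by (simp add: ImO_iff)
qed

lemma n1: assumes t: "t \<in> J" shows "fI1 \<gamma> t \<bullet> fI1 \<gamma> t = 1"
proof -
  have k: "fk1 \<gamma> t > 0" using k1p t by blast
  have VV: "vd (fI4 \<gamma>) t \<bullet> vd (fI4 \<gamma>) t = fk1 \<gamma> t * fk1 \<gamma> t"
    by (simp add: k1_eq inner_self_norm power2_eq_square)
  have "fI1 \<gamma> t \<bullet> fI1 \<gamma> t = inverse (fk1 \<gamma> t) * (inverse (fk1 \<gamma> t) * (vd (fI4 \<gamma>) t \<bullet> vd (fI4 \<gamma>) t))"
    by (simp add: I1_eq)
  also have "\<dots> = 1" using k by (simp add: VV field_simps)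
  finally show ?thesis .
qed

lemma Im5: "fI5 \<gamma> t \<in> ImO" by (simp add: fI5_def ocross_Im)

lemma n5: "t \<in> J \<Longrightarrow> fI5 \<gamma> t \<bullet> fI5 \<gamma> t = 1"
  using G1[OF Im1 Im4 Im4] n1 n4 o41 by (simp add: fI5_def inner_commute)

lemma o54: "t \<in> J \<Longrightarrow> fI5 \<gamma> t \<bullet> fI4 \<gamma> t = 0"
  using cross_inner_right[OF Im1 Im4] by (simp add: fI5_def)

lemma o45: "t \<in> J \<Longrightarrow> fI4 \<gamma> t \<bullet> fI5 \<gamma> t = 0"
  using o54 by (simp add: inner_commute)

lemma o51: "t \<in> J \<Longrightarrow> fI5 \<gamma> t \<bullet> fI1 \<gamma> t = 0"
  using cross_inner_left[OF Im1 Im4] by (simp add: fI5_def)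

lemma dI1_4: assumes t: "t \<in> J" shows "vd (fI1 \<gamma>) t \<bullet> fI4 \<gamma> t = - fk1 \<gamma> t"
proof -
  have "\<forall>u\<in>J. fI1 \<gamma> u \<bullet> fI4 \<gamma> u = 0" using o41 by (simp add: inner_commute)
  from inner_const_deriv[OF Jo t d1[OF t] d4[OF t] this]
  show ?thesis using n1[OF t] by (simp add: vd4[OF t])
qed

lemma dI1_1: assumes t: "t \<in> J" shows "vd (fI1 \<gamma>) t \<bullet> fI1 \<gamma> t = 0"
proof -
  have "\<forall>u\<in>J. fI1 \<gamma> u \<bullet> fI1 \<gamma> u = 1" using n1 by blast
  from inner_const_deriv[OF Jo t d1[OF t] d1[OF t] this]
  show ?thesis by (simp add: inner_commute)
qed

lemma dI1_0: assumes t: "t \<in> J" shows "vd (fI1 \<gamma>) t \<bullet> oone = 0"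
proof -
  have "\<forall>u\<in>J. fI1 \<gamma> u \<bullet> (\<lambda>_. oone) u = 0" using Im1 by (simp add: ImO_iff)
  from inner_const_deriv[OF Jo t d1[OF t] has_vector_derivative_const this]
  show ?thesis by simp
qed

definition "Vv t = vd (fI1 \<gamma>) t"
definition "aa t = vd (fI1 \<gamma>) t \<bullet> fI4 \<gamma> t"
definition "bb t = vd (fI1 \<gamma>) t \<bullet> fI5 \<gamma> t"
definition "RR t = vd (fI1 \<gamma>) t - aa t *\<^sub>R fI4 \<gamma> t - bb t *\<^sub>R fI5 \<gamma> t"
definition "GG t = vd (fI1 \<gamma>) t \<bullet> vd (fI1 \<gamma>) t - aa t * aa t - bb t * bb t"

lemma kappa_eq: "fkappa2 \<gamma> t = sqrt (GG t)"
  by (simp add: fkappa2_def GG_def aa_def bb_def onorm_norm oinner_inner inner_self_norm power2_eq_square)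

lemma RR_sq: "t \<in> J \<Longrightarrow> RR t \<bullet> RR t = GG t"
  unfolding RR_def GG_def
  using n4 n5 o54
  by (simp add: inner_diff_left inner_diff_right aa_def bb_def inner_commute algebra_simps power2_eq_square)

lemma sm_GG: "sm J GG"
proof -
  have v: "sm J (vd (fI1 \<gamma>))" using sm_vd[OF Jo sm1] .
  have a: "sm J aa" unfolding aa_def using sm_inner[OF v sm4] .
  have b: "sm J bb" unfolding bb_def using sm_inner[OF v sm5] .
  show ?thesis unfolding GG_def using sm_diff[OF sm_diff[OF sm_inner[OF v v] sm_mult[OF a a]] sm_mult[OF b b]] .
qed

lemma pos_case:
  assumes pc: "\<forall>s\<in>J. fkappa2 \<gamma> s > 0 \<and> I2 s = fI2pos \<gamma> s"
  shows "sm J I2"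
    and "\<forall>s\<in>J. I2 s \<in> ImO \<and> I2 s \<bullet> I2 s = 1 \<and> I2 s \<bullet> fI4 \<gamma> s = 0 \<and> I2 s \<bullet> fI1 \<gamma> s = 0 \<and> I2 s \<bullet> fI5 \<gamma> s = 0"
    and "\<forall>s\<in>J. vd (fI1 \<gamma>) s = (- fk1 \<gamma> s) *\<^sub>R fI4 \<gamma> s + fkappa2 \<gamma> s *\<^sub>R I2 s + rho1 \<gamma> s *\<^sub>R fI5 \<gamma> s"
proof -
  have I2e: "I2 s = inverse (fkappa2 \<gamma> s) *\<^sub>R RR s" if "s \<in> J" for s
    using pc that by (simp add: fI2pos_def RR_def aa_def bb_def oinner_inner inverse_eq_divide)
  have Gp: "\<forall>s\<in>J. GG s > 0" using pc kappa_eq by (metis real_sqrt_gt_0_iff)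
  have smk: "sm J (fkappa2 \<gamma>)" using sm_sqrt[OF sm_GG Gp] by (rule sm_eqI) (simp add: kappa_eq)
  have smR: "sm J RR"
  proof -
    have v: "sm J (vd (fI1 \<gamma>))" using sm_vd[OF Jo sm1] .
    have a: "sm J aa" unfolding aa_def using sm_inner[OF v sm4] .
    have b: "sm J bb" unfolding bb_def using sm_inner[OF v sm5] .
    show ?thesis unfolding RR_def using sm_diff[OF sm_diff[OF v sm_scaleR[OF a sm4]] sm_scaleR[OF b sm5]] .
  qed
  have "\<forall>s\<in>J. fkappa2 \<gamma> s \<noteq> 0" using pc by (metis order_less_irrefl)
  then have ki: "sm J (\<lambda>s. inverse (fkappa2 \<gamma> s))" by (rule sm_inverse[OF smk])
  have "sm J (\<lambda>s. inverse (fkappa2 \<gamma> s) *\<^sub>R RR s)" using sm_scaleR[OF ki smR] .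
  then show "sm J I2" by (rule sm_cong[OF Jo, rotated]) (simp add: I2e)
  show "\<forall>s\<in>J. I2 s \<in> ImO \<and> I2 s \<bullet> I2 s = 1 \<and> I2 s \<bullet> fI4 \<gamma> s = 0 \<and> I2 s \<bullet> fI1 \<gamma> s = 0 \<and> I2 s \<bullet> fI5 \<gamma> s = 0"
  proof
    fix s assume s: "s \<in> J"
    have kp: "fkappa2 \<gamma> s > 0" using conjunct1[OF bspec[OF pc s]] .
    have Gs: "GG s > 0" using Gp s by blast
    have kk: "fkappa2 \<gamma> s * fkappa2 \<gamma> s = GG s" using Gs by (simp add: kappa_eq)
    have R4: "RR s \<bullet> fI4 \<gamma> s = 0" using n4[OF s] o54[OF s]
      by (simp add: RR_def inner_diff_left aa_def bb_def)
    have R5: "RR s \<bullet> fI5 \<gamma> s = 0" using n5[OF s] o45[OF s]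
      by (simp add: RR_def inner_diff_left aa_def bb_def)
    have R1: "RR s \<bullet> fI1 \<gamma> s = 0" using dI1_1[OF s] o41[OF s] o51[OF s]
      by (simp add: RR_def inner_diff_left aa_def bb_def)
    have R0: "RR s \<bullet> oone = 0" using dI1_0[OF s] Im4[OF s] Im5[of s]
      by (simp add: RR_def inner_diff_left aa_def bb_def ImO_iff)
    have RR: "RR s \<bullet> RR s = GG s" using RR_sq[OF s] .
    show "I2 s \<in> ImO \<and> I2 s \<bullet> I2 s = 1 \<and> I2 s \<bullet> fI4 \<gamma> s = 0 \<and> I2 s \<bullet> fI1 \<gamma> s = 0 \<and> I2 s \<bullet> fI5 \<gamma> s = 0"
      using kp kk R4 R5 R1 R0 RR Gs by (simp add: I2e[OF s] ImO_iff field_simps)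
  qed
  show "\<forall>s\<in>J. vd (fI1 \<gamma>) s = (- fk1 \<gamma> s) *\<^sub>R fI4 \<gamma> s + fkappa2 \<gamma> s *\<^sub>R I2 s + rho1 \<gamma> s *\<^sub>R fI5 \<gamma> s"
  proof
    fix s assume s: "s \<in> J"
    have kp: "fkappa2 \<gamma> s > 0" using conjunct1[OF bspec[OF pc s]] .
    have "fkappa2 \<gamma> s *\<^sub>R I2 s = RR s" using kp by (simp add: I2e[OF s])
    then show "vd (fI1 \<gamma>) s = (- fk1 \<gamma> s) *\<^sub>R fI4 \<gamma> s + fkappa2 \<gamma> s *\<^sub>R I2 s + rho1 \<gamma> s *\<^sub>R fI5 \<gamma> s"
      using dI1_4[OF s] by (simp add: RR_def aa_def bb_def rho1_def oinner_inner algebra_simps)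
  qed
qed

lemma zero_case:
  assumes zc: "\<forall>s\<in>J. fkappa2 \<gamma> s = 0"
  shows "\<forall>s\<in>J. vd (fI1 \<gamma>) s = (- fk1 \<gamma> s) *\<^sub>R fI4 \<gamma> s + fkappa2 \<gamma> s *\<^sub>R I2 s + rho1 \<gamma> s *\<^sub>R fI5 \<gamma> s"
proof
  fix s assume s: "s \<in> J"
  have "GG s \<le> 0" using zc s kappa_eq by (metis real_sqrt_gt_0_iff not_less order_less_irrefl)
  moreover have "GG s \<ge> 0" using RR_sq[OF s] by (metis inner_ge_zero)
  ultimately have "RR s \<bullet> RR s = 0" using RR_sq[OF s] by simp
  then have "RR s = 0" by simp
  then show "vd (fI1 \<gamma>) s = (- fk1 \<gamma> s) *\<^sub>R fI4 \<gamma> s + fkappa2 \<gamma> s *\<^sub>R I2 s + rho1 \<gamma> s *\<^sub>R fI5 \<gamma> s"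
    using dI1_4[OF s] zc s by (simp add: RR_def aa_def bb_def rho1_def oinner_inner algebra_simps)
qed

end


lemma vd_cross:
  assumes "(f has_vector_derivative f') (at t)" "(g has_vector_derivative g') (at t)"
  shows "vd (\<lambda>s. ocross (f s) (g s)) t = ocross (f t) g' + ocross f' (g t)"
  using bounded_bilinear.has_vector_derivative[OF bounded_bilinear_ocross assms]
  by (simp add: vd_def vector_derivative_at)

lemma fI5_fun: "fI5 \<gamma> = (\<lambda>s. ocross (fI1 \<gamma> s) (fI4 \<gamma> s))" by (rule ext) (simp add: fI5_def)
lemma fI3_fun: "fI3 \<gamma> I2 = (\<lambda>s. ocross (fI1 \<gamma> s) (I2 s))" by (rule ext) (simp add: fI3_def)
lemma fI6_fun: "fI6 \<gamma> I2 = (\<lambda>s. ocross (I2 s) (fI4 \<gamma> s))" by (rule ext) (simp add: fI6_def)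
lemma fI7_fun: "fI7 \<gamma> I2 = (\<lambda>s. ocross (fI3 \<gamma> I2 s) (fI4 \<gamma> s))" by (rule ext) (simp add: fI7_def)

locale curve2 = curve +
  fixes I2 :: "real \<Rightarrow> oct"
  assumes sm2: "sm J I2"
    and I2fr: "\<forall>s\<in>J. I2 s \<in> ImO \<and> I2 s \<bullet> I2 s = 1 \<and> I2 s \<bullet> fI4 \<gamma> s = 0 \<and> I2 s \<bullet> fI1 \<gamma> s = 0 \<and> I2 s \<bullet> fI5 \<gamma> s = 0"
    and dI1: "\<forall>s\<in>J. vd (fI1 \<gamma>) s = (- fk1 \<gamma> s) *\<^sub>R fI4 \<gamma> s + fkappa2 \<gamma> s *\<^sub>R I2 s + rho1 \<gamma> s *\<^sub>R fI5 \<gamma> s"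
begin

lemma Im2: "t \<in> J \<Longrightarrow> I2 t \<in> ImO" using I2fr by blast
lemma n2: "t \<in> J \<Longrightarrow> I2 t \<bullet> I2 t = 1" using I2fr by blast
lemma o24: "t \<in> J \<Longrightarrow> I2 t \<bullet> fI4 \<gamma> t = 0" using I2fr by blast
lemma o21: "t \<in> J \<Longrightarrow> I2 t \<bullet> fI1 \<gamma> t = 0" using I2fr by blast
lemma o25: "t \<in> J \<Longrightarrow> I2 t \<bullet> fI5 \<gamma> t = 0" using I2fr by blast
lemma o12: "t \<in> J \<Longrightarrow> fI1 \<gamma> t \<bullet> I2 t = 0" using o21 by (simp add: inner_commute)
lemma o14: "t \<in> J \<Longrightarrow> fI1 \<gamma> t \<bullet> fI4 \<gamma> t = 0" using o41 by (simp add: inner_commute)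
lemma phi_t: "t \<in> J \<Longrightarrow> I2 t \<bullet> ocross (fI1 \<gamma> t) (fI4 \<gamma> t) = 0" using o25 by (simp add: fI5_def)
lemma d3_t: "t \<in> J \<Longrightarrow> fI3 \<gamma> I2 t = ocross (fI1 \<gamma> t) (I2 t)" by (simp add: fI3_def)
lemma d5_t: "t \<in> J \<Longrightarrow> fI5 \<gamma> t = ocross (fI1 \<gamma> t) (fI4 \<gamma> t)" by (simp add: fI5_def)
lemma d6_t: "t \<in> J \<Longrightarrow> fI6 \<gamma> I2 t = ocross (I2 t) (fI4 \<gamma> t)" by (simp add: fI6_def)
lemma d7_t: "t \<in> J \<Longrightarrow> fI7 \<gamma> I2 t = ocross (fI3 \<gamma> I2 t) (fI4 \<gamma> t)" by (simp add: fI7_def)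

lemma dI1t: "t \<in> J \<Longrightarrow> vd (fI1 \<gamma>) t = (- fk1 \<gamma> t) *\<^sub>R fI4 \<gamma> t + fkappa2 \<gamma> t *\<^sub>R I2 t + rho1 \<gamma> t *\<^sub>R fI5 \<gamma> t"
  using dI1 by blast

lemmas P = Im1 Im2 Im4 n1 n2 n4 o12 o14 o24 phi_t d3_t d5_t d6_t d7_t

lemma eqf: assumes t: "t \<in> J"
  and "x \<bullet> oone = y \<bullet> oone" "x \<bullet> fI1 \<gamma> t = y \<bullet> fI1 \<gamma> t" "x \<bullet> I2 t = y \<bullet> I2 t"
    "x \<bullet> fI3 \<gamma> I2 t = y \<bullet> fI3 \<gamma> I2 t" "x \<bullet> fI4 \<gamma> t = y \<bullet> fI4 \<gamma> t" "x \<bullet> fI5 \<gamma> t = y \<bullet> fI5 \<gamma> t"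
    "x \<bullet> fI6 \<gamma> I2 t = y \<bullet> fI6 \<gamma> I2 t" "x \<bullet> fI7 \<gamma> I2 t = y \<bullet> fI7 \<gamma> I2 t"
  shows "x = y"
  using span8[OF P[OF t]] assms(2-) by blast

lemma sm3: "sm J (fI3 \<gamma> I2)" unfolding fI3_fun using sm_ocross[OF sm1 sm2] .
lemma sm6: "sm J (fI6 \<gamma> I2)" unfolding fI6_fun using sm_ocross[OF sm2 sm4] .
lemma sm7: "sm J (fI7 \<gamma> I2)" unfolding fI7_fun using sm_ocross[OF sm3 sm4] .

lemma d2: "t \<in> J \<Longrightarrow> (I2 has_vector_derivative vd I2 t) (at t)" using sm_deriv[OF Jo sm2] .
lemma d3: "t \<in> J \<Longrightarrow> (fI3 \<gamma> I2 has_vector_derivative vd (fI3 \<gamma> I2) t) (at t)" using sm_deriv[OF Jo sm3] .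

lemmas lin = inner_add_left inner_diff_left inner_scaleR_left inner_minus_left
  inner_add_right inner_diff_right inner_scaleR_right inner_minus_right ocross_lin

lemma D5: assumes t: "t \<in> J"
  shows "vd (fI5 \<gamma>) t = fkappa2 \<gamma> t *\<^sub>R fI6 \<gamma> I2 t - rho1 \<gamma> t *\<^sub>R fI1 \<gamma> t"
proof -
  note ON = on_all[OF P[OF t]] and TB = table[OF P[OF t]]
  have "vd (fI5 \<gamma>) t = ocross (fI1 \<gamma> t) (vd (fI4 \<gamma>) t) + ocross (vd (fI1 \<gamma>) t) (fI4 \<gamma> t)"
    unfolding fI5_fun by (rule vd_cross[OF d1[OF t] d4[OF t]])
  also have "\<dots> = fkappa2 \<gamma> t *\<^sub>R fI6 \<gamma> I2 t - rho1 \<gamma> t *\<^sub>R fI1 \<gamma> t"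
    using dI1 t by (simp add: vd4[OF t] ocross_lin TB)
  finally show ?thesis .
qed

lemma D2: assumes t: "t \<in> J"
  shows "vd I2 t = (- fkappa2 \<gamma> t) *\<^sub>R fI1 \<gamma> t + galpha \<gamma> I2 t *\<^sub>R fI3 \<gamma> I2 t
     + rho2 \<gamma> I2 t *\<^sub>R fI6 \<gamma> I2 t + gbeta1 \<gamma> I2 t *\<^sub>R fI7 \<gamma> I2 t"
proof -
  note ON = on_all[OF P[OF t]] and TB = table[OF P[OF t]]
  have c0: "vd I2 t \<bullet> oone = 0"
  proof -
    have "\<forall>u\<in>J. I2 u \<bullet> (\<lambda>_. oone) u = 0" using Im2 by (simp add: ImO_iff)
    from inner_const_deriv[OF Jo t d2[OF t] has_vector_derivative_const this] show ?thesis by simp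
  qed
  have c1: "vd I2 t \<bullet> fI1 \<gamma> t = - fkappa2 \<gamma> t"
  proof -
    have "\<forall>u\<in>J. I2 u \<bullet> fI1 \<gamma> u = 0" using o21 by blast
    from inner_const_deriv[OF Jo t d2[OF t] d1[OF t] this] show ?thesis
      using dI1 t by (simp add: lin ON)
  qed
  have c2: "vd I2 t \<bullet> I2 t = 0"
  proof -
    have "\<forall>u\<in>J. I2 u \<bullet> I2 u = 1" using n2 by blast
    from inner_const_deriv[OF Jo t d2[OF t] d2[OF t] this] show ?thesis by (simp add: inner_commute)
  qed
  have c4: "vd I2 t \<bullet> fI4 \<gamma> t = 0"
  proof -
    have "\<forall>u\<in>J. I2 u \<bullet> fI4 \<gamma> u = 0" using o24 by blast
    from inner_const_deriv[OF Jo t d2[OF t] d4[OF t] this] show ?thesis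
      by (simp add: lin vd4[OF t] ON)
  qed
  have c5: "vd I2 t \<bullet> fI5 \<gamma> t = 0"
  proof -
    have "\<forall>u\<in>J. I2 u \<bullet> fI5 \<gamma> u = 0" using o25 by blast
    from inner_const_deriv[OF Jo t d2[OF t] d5[OF t] this] show ?thesis
      by (simp add: lin D5[OF t] ON)
  qed
  show ?thesis
    by (rule eqf[OF t]) (simp_all add: c0 c1 c2 c4 c5 lin ON galpha_def rho2_def gbeta1_def oinner_inner)
qed

lemma D3: assumes t: "t \<in> J"
  shows "vd (fI3 \<gamma> I2) t = (- galpha \<gamma> I2 t) *\<^sub>R I2 t + (fk1 \<gamma> t + gbeta1 \<gamma> I2 t) *\<^sub>R fI6 \<gamma> I2 t
     - (rho1 \<gamma> t + rho2 \<gamma> I2 t) *\<^sub>R fI7 \<gamma> I2 t"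
proof -
  note ON = on_all[OF P[OF t]] and TB = table[OF P[OF t]]
  have "vd (fI3 \<gamma> I2) t = ocross (fI1 \<gamma> t) (vd I2 t) + ocross (vd (fI1 \<gamma>) t) (I2 t)"
    unfolding fI3_fun by (rule vd_cross[OF d1[OF t] d2[OF t]])
  also have "\<dots> = (- galpha \<gamma> I2 t) *\<^sub>R I2 t + (fk1 \<gamma> t + gbeta1 \<gamma> I2 t) *\<^sub>R fI6 \<gamma> I2 t
     - (rho1 \<gamma> t + rho2 \<gamma> I2 t) *\<^sub>R fI7 \<gamma> I2 t"
    by (rule eqf[OF t]) (simp_all add: dI1t[OF t] D2[OF t] ocross_lin TB lin ON algebra_simps)
  finally show ?thesis .
qed

lemma D6: assumes t: "t \<in> J"
  shows "vd (fI6 \<gamma> I2) t = (- rho2 \<gamma> I2 t) *\<^sub>R I2 t - (fk1 \<gamma> t + gbeta1 \<gamma> I2 t) *\<^sub>R fI3 \<gamma> I2 t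
     - fkappa2 \<gamma> t *\<^sub>R fI5 \<gamma> t + galpha \<gamma> I2 t *\<^sub>R fI7 \<gamma> I2 t"
proof -
  note ON = on_all[OF P[OF t]] and TB = table[OF P[OF t]]
  have "vd (fI6 \<gamma> I2) t = ocross (I2 t) (vd (fI4 \<gamma>) t) + ocross (vd I2 t) (fI4 \<gamma> t)"
    unfolding fI6_fun by (rule vd_cross[OF d2[OF t] d4[OF t]])
  also have "\<dots> = (- rho2 \<gamma> I2 t) *\<^sub>R I2 t - (fk1 \<gamma> t + gbeta1 \<gamma> I2 t) *\<^sub>R fI3 \<gamma> I2 t
     - fkappa2 \<gamma> t *\<^sub>R fI5 \<gamma> t + galpha \<gamma> I2 t *\<^sub>R fI7 \<gamma> I2 t"
    by (rule eqf[OF t]) (simp_all add: D2[OF t] vd4[OF t] ocross_lin TB lin ON algebra_simps)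
  finally show ?thesis .
qed

lemma D7: assumes t: "t \<in> J"
  shows "vd (fI7 \<gamma> I2) t = (- gbeta1 \<gamma> I2 t) *\<^sub>R I2 t + (rho1 \<gamma> t + rho2 \<gamma> I2 t) *\<^sub>R fI3 \<gamma> I2 t
     - galpha \<gamma> I2 t *\<^sub>R fI6 \<gamma> I2 t"
proof -
  note ON = on_all[OF P[OF t]] and TB = table[OF P[OF t]]
  have "vd (fI7 \<gamma> I2) t = ocross (fI3 \<gamma> I2 t) (vd (fI4 \<gamma>) t) + ocross (vd (fI3 \<gamma> I2) t) (fI4 \<gamma> t)"
    unfolding fI7_fun by (rule vd_cross[OF d3[OF t] d4[OF t]])
  also have "\<dots> = (- gbeta1 \<gamma> I2 t) *\<^sub>R I2 t + (rho1 \<gamma> t + rho2 \<gamma> I2 t) *\<^sub>R fI3 \<gamma> I2 t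
     - galpha \<gamma> I2 t *\<^sub>R fI6 \<gamma> I2 t"
    by (rule eqf[OF t]) (simp_all add: D3[OF t] vd4[OF t] ocross_lin TB lin ON algebra_simps)
  finally show ?thesis .
qed

lemma rho3_eq: "t \<in> J \<Longrightarrow> rho3 \<gamma> I2 t = - (rho1 \<gamma> t + rho2 \<gamma> I2 t)"
  using on_all[OF P] by (simp add: rho3_def oinner_inner D3 lin)

lemma beta2_eq: "t \<in> J \<Longrightarrow> gbeta2 \<gamma> I2 t = fk1 \<gamma> t + gbeta1 \<gamma> I2 t"
  using on_all[OF P] by (simp add: gbeta2_def oinner_inner D3 lin)

end


section \<open>Phases\<close>

lemma interval_sub: fixes J :: "real set"
  assumes "is_interval J" "a \<in> J" "b \<in> J" shows "{a..b} \<subseteq> J"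
proof
  fix x assume x: "x \<in> {a..b}"
  have "\<forall>a\<in>J. \<forall>b\<in>J. \<forall>x. a \<le> x \<and> x \<le> b \<longrightarrow> x \<in> J" using assms(1) by (simp only: is_interval_1)
  moreover have "a \<le> x" "x \<le> b" using x by auto
  ultimately show "x \<in> J" using assms(2,3) by blast
qed

lemma cont_int: fixes \<rho> :: "real \<Rightarrow> real"
  assumes "continuous_on S \<rho>" "{c..d} \<subseteq> S" shows "\<rho> integrable_on {c..d}"
  by (rule integrable_continuous_real[OF continuous_on_subset[OF assms]])

lemma sint_split:
  assumes c: "continuous_on {a..b} \<rho>" and u: "u \<in> {a..b}" and z: "0 \<in> {a..b}"
  shows "sint 0 u \<rho> = integral {a..u} \<rho> - integral {a..0} \<rho>"
proof (cases "0 \<le> u")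
  case True
  have i: "\<rho> integrable_on {a..u}" using u by (intro cont_int[OF c]) auto
  have "integral {a..0} \<rho> + integral {0..u} \<rho> = integral {a..u} \<rho>"
    using Henstock_Kurzweil_Integration.integral_combine[where a=a and c=0 and b=u and f=\<rho>] i True z by auto
  then show ?thesis using True by (simp add: sint_def)
next
  case False
  have i: "\<rho> integrable_on {a..0}" using z by (intro cont_int[OF c]) auto
  have "integral {a..u} \<rho> + integral {u..0} \<rho> = integral {a..0} \<rho>"
    using Henstock_Kurzweil_Integration.integral_combine[where a=a and c=u and b=0 and f=\<rho>] i False u by auto
  then show ?thesis using False by (simp add: sint_def)
qed

lemma sint_deriv:
  assumes J: "open J" "is_interval J" "0 \<in> J" and c: "continuous_on J \<rho>" and s: "s \<in> J"
  shows "((\<lambda>t. sint 0 t \<rho>) has_real_derivative \<rho> s) (at s)"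
proof -
  obtain e1 where e1: "e1 > 0" "ball s e1 \<subseteq> J" using J(1) s openE by blast
  obtain e2 where e2: "e2 > 0" "ball 0 e2 \<subseteq> J" using J(1) J(3) openE by blast
  define e where "e = min e1 e2"
  have e: "e > 0" "ball s e \<subseteq> J" "ball 0 e \<subseteq> J" using e1 e2 unfolding e_def by auto
  define a where "a = min 0 s - e/2"
  define b where "b = max 0 s + e/2"
  have aJ: "a \<in> J"
  proof (cases "s \<le> 0")
    case True then have "a \<in> ball s e" using e by (simp add: a_def dist_real_def)
    then show ?thesis using e by blast
  next
    case False then have "a \<in> ball 0 e" using e by (simp add: a_def dist_real_def)
    then show ?thesis using e by blast
  qed
  have bJ: "b \<in> J"
  proof (cases "s \<le> 0")
    case True then have "b \<in> ball 0 e" using e by (simp add: b_def dist_real_def)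
    then show ?thesis using e by blast
  next
    case False then have "b \<in> ball s e" using e by (simp add: b_def dist_real_def)
    then show ?thesis using e by blast
  qed
  have sub: "{a..b} \<subseteq> J" using interval_sub[OF J(2) aJ bJ] .
  have cab: "continuous_on {a..b} \<rho>" using continuous_on_subset[OF c sub] .
  have sin: "s \<in> {a<..<b}" using e by (simp add: a_def b_def min_def max_def)
  have z: "0 \<in> {a..b}" using e by (simp add: a_def b_def min_def max_def)
  have "((\<lambda>u. integral {a..u} \<rho>) has_vector_derivative \<rho> s) (at s within {a..b})"
    using integral_has_vector_derivative[OF cab] sin by auto
  then have "((\<lambda>u. integral {a..u} \<rho>) has_vector_derivative \<rho> s) (at s within {a<..<b})"
    by (rule has_vector_derivative_within_subset) auto
  then have "((\<lambda>u. integral {a..u} \<rho>) has_vector_derivative \<rho> s) (at s)"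
    using has_vector_derivative_within_open[OF sin open_greaterThanLessThan] by blast
  then have "((\<lambda>u. integral {a..u} \<rho> - integral {a..0} \<rho>) has_vector_derivative \<rho> s) (at s)"
    by (simp add: has_vector_derivative_diff_const)
  then have "((\<lambda>t. sint 0 t \<rho>) has_vector_derivative \<rho> s) (at s)"
    by (rule has_vector_derivative_transform_within_open[OF _ open_greaterThanLessThan sin])
       (use sint_split[OF cab _ z] in auto)
  then show ?thesis by (simp add: has_real_derivative_iff_has_vector_derivative)
qed

lemma phase_deriv:
  assumes "((\<lambda>t. sint 0 t \<rho>) has_real_derivative \<rho> s) (at s)"
  shows "(phase \<rho> has_vector_derivative (- \<i> * complex_of_real (\<rho> s) * phase \<rho> s)) (at s)"
proof -
  define f where "f = (\<lambda>t. - \<i> * complex_of_real (sint 0 t \<rho>))"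
  have df: "(f has_vector_derivative (- \<i> * complex_of_real (\<rho> s))) (at s)"
    unfolding f_def
    using bounded_linear.has_vector_derivative[OF bounded_linear_mult_right[of "- \<i>"] has_vector_derivative_of_real[OF assms]]
    by simp
  have "((exp \<circ> f) has_vector_derivative ((- \<i> * complex_of_real (\<rho> s)) * exp (f s))) (at s)"
    by (rule field_vector_diff_chain_at[OF df DERIV_exp])
  then have "((\<lambda>t. complex_of_real (1 / sqrt 2) * (exp \<circ> f) t) has_vector_derivative
      complex_of_real (1 / sqrt 2) * ((- \<i> * complex_of_real (\<rho> s)) * exp (f s))) (at s)"
    by (rule bounded_linear.has_vector_derivative[OF bounded_linear_mult_right])
  then show ?thesis unfolding phase_def f_def o_def by (simp add: algebra_simps)
qed

lemma sint_lin:
  assumes J: "is_interval J" "0 \<in> J" and s: "s \<in> J" and c1: "continuous_on J \<rho>1" and c2: "continuous_on J \<rho>2"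
    and eq: "\<forall>t\<in>J. \<rho>3 t = - (\<rho>1 t + \<rho>2 t)"
  shows "sint 0 s \<rho>3 = - (sint 0 s \<rho>1 + sint 0 s \<rho>2)"
proof (cases "0 \<le> s")
  case True
  have sub: "{0..s} \<subseteq> J" using interval_sub[OF J(1) J(2) s] .
  have i1: "\<rho>1 integrable_on {0..s}" by (rule cont_int[OF c1 sub])
  have i2: "\<rho>2 integrable_on {0..s}" by (rule cont_int[OF c2 sub])
  have "integral {0..s} \<rho>3 = integral {0..s} (\<lambda>t. - (\<rho>1 t + \<rho>2 t))"
    by (rule integral_cong) (use eq sub in auto)
  also have "\<dots> = - (integral {0..s} \<rho>1 + integral {0..s} \<rho>2)" by (simp only: integral_neg integral_add[OF i1 i2])
  finally show ?thesis using True by (simp add: sint_def)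
next
  case False
  have sub: "{s..0} \<subseteq> J" using interval_sub[OF J(1) s J(2)] .
  have i1: "\<rho>1 integrable_on {s..0}" by (rule cont_int[OF c1 sub])
  have i2: "\<rho>2 integrable_on {s..0}" by (rule cont_int[OF c2 sub])
  have "integral {s..0} \<rho>3 = integral {s..0} (\<lambda>t. - (\<rho>1 t + \<rho>2 t))"
    by (rule integral_cong) (use eq sub in auto)
  also have "\<dots> = - (integral {s..0} \<rho>1 + integral {s..0} \<rho>2)" by (simp only: integral_neg integral_add[OF i1 i2])
  finally show ?thesis using False by (simp add: sint_def)
qed

lemma phase_norm: "phase \<rho> s * cnj (phase \<rho> s) = 1/2"
proof -
  have "phase \<rho> s * cnj (phase \<rho> s) = complex_of_real (1 / sqrt 2) * complex_of_real (1 / sqrt 2) *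
     (exp (- \<i> * complex_of_real (sint 0 s \<rho>)) * exp (\<i> * complex_of_real (sint 0 s \<rho>)))"
    by (simp add: phase_def exp_cnj)
  also have "exp (- \<i> * complex_of_real (sint 0 s \<rho>)) * exp (\<i> * complex_of_real (sint 0 s \<rho>)) = 1"
    by (simp add: exp_add[symmetric])
  finally show ?thesis by (simp flip: of_real_mult)
qed

lemma phase_rel:
  assumes "sint 0 s \<rho>3 = - (sint 0 s \<rho>1 + sint 0 s \<rho>2)"
  shows "phase \<rho>3 s = complex_of_real (sqrt 2) * cnj (phase \<rho>1 s) * cnj (phase \<rho>2 s)"
proof -
  have "complex_of_real (sqrt 2) * cnj (phase \<rho>1 s) * cnj (phase \<rho>2 s) =
     (complex_of_real (sqrt 2) * complex_of_real (1 / sqrt 2) * complex_of_real (1 / sqrt 2)) *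
     (exp (\<i> * complex_of_real (sint 0 s \<rho>1)) * exp (\<i> * complex_of_real (sint 0 s \<rho>2)))"
    by (simp add: phase_def exp_cnj)
  also have "exp (\<i> * complex_of_real (sint 0 s \<rho>1)) * exp (\<i> * complex_of_real (sint 0 s \<rho>2))
      = exp (- \<i> * complex_of_real (sint 0 s \<rho>3))"
    unfolding assms by (simp add: exp_add[symmetric] algebra_simps)
  also have "complex_of_real (sqrt 2) * complex_of_real (1 / sqrt 2) * complex_of_real (1 / sqrt 2)
      = complex_of_real (1 / sqrt 2)"
    by (simp flip: of_real_mult)
  finally show ?thesis by (simp add: phase_def)
qed


section \<open>Complexification\<close>

lemma cscale_add_left: "cscale (a + b) X = cscale a X + cscale b X"
  by (cases X) (simp add: cscale_def algebra_simps)
lemma cscale_scaleR_left: "cscale (r *\<^sub>R a) X = r *\<^sub>R cscale a X"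
  by (cases X) (simp add: cscale_def algebra_simps)
lemma cscale_add_right: "cscale a (X + Y) = cscale a X + cscale a Y"
  by (cases X, cases Y) (simp add: cscale_def algebra_simps)
lemma cscale_scaleR_right: "cscale a (r *\<^sub>R X) = r *\<^sub>R cscale a X"
  by (cases X) (simp add: cscale_def algebra_simps)

lemma bounded_bilinear_cscale: "bounded_bilinear cscale"
proof -
  have "bilinear cscale"
    unfolding bilinear_def linear_iff
    by (simp only: cscale_add_left cscale_add_right cscale_scaleR_left cscale_scaleR_right simp_thms all_simps)
  then show ?thesis using bilinear_conv_bounded_bilinear by blast
qed

lemma bounded_linear_emb: "bounded_linear emb"
proof -
  have "linear emb" by (rule linearI) (simp_all add: emb_def)
  then show ?thesis using linear_conv_bounded_linear by blast
qed

lemma bounded_linear_cconj: "bounded_linear cconj"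
proof -
  have "linear cconj" by (rule linearI) (auto simp: cconj_def split_beta)
  then show ?thesis using linear_conv_bounded_linear by blast
qed

definition crd :: "oct \<Rightarrow> coct \<Rightarrow> complex" where
  "crd b X = Complex (fst X \<bullet> b) (snd X \<bullet> b)"

lemma crd_add[simp]: "crd b (X + Y) = crd b X + crd b Y"
  by (simp add: crd_def complex_eq_iff inner_add_left)
lemma crd_diff[simp]: "crd b (X - Y) = crd b X - crd b Y"
  by (simp add: crd_def complex_eq_iff inner_diff_left)
lemma crd_minus[simp]: "crd b (- X) = - crd b X"
  by (simp add: crd_def complex_eq_iff)
lemma crd_cscale[simp]: "crd b (cscale c X) = c * crd b X"
  by (simp add: crd_def complex_eq_iff cscale_def split_beta inner_diff_left inner_add_left)
lemma crd_cconj[simp]: "crd b (cconj X) = cnj (crd b X)"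
  by (simp add: crd_def complex_eq_iff cconj_def split_beta)
lemma crd_emb[simp]: "crd b (emb x) = complex_of_real (x \<bullet> b)"
  by (simp add: crd_def complex_eq_iff emb_def)

lemma vd_ce:
  assumes c: "(c has_vector_derivative c') (at t)" and x: "(x has_vector_derivative x') (at t)"
    and y: "(y has_vector_derivative y') (at t)"
  shows "vd (\<lambda>t. cscale (c t) (emb (x t) - cscale \<i> (emb (y t)))) t =
      cscale (c t) (emb x' - cscale \<i> (emb y')) + cscale c' (emb (x t) - cscale \<i> (emb (y t)))"
    and "vd (\<lambda>t. cconj (cscale (c t) (emb (x t) - cscale \<i> (emb (y t))))) t =
      cconj (cscale (c t) (emb x' - cscale \<i> (emb y')) + cscale c' (emb (x t) - cscale \<i> (emb (y t))))"
proof -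
  have ex: "((\<lambda>t. emb (x t)) has_vector_derivative emb x') (at t)"
    using bounded_linear.has_vector_derivative[OF bounded_linear_emb x] .
  have ey: "((\<lambda>t. cscale \<i> (emb (y t))) has_vector_derivative cscale \<i> (emb y')) (at t)"
    using bounded_linear.has_vector_derivative[OF bounded_bilinear.bounded_linear_right[OF bounded_bilinear_cscale]
      bounded_linear.has_vector_derivative[OF bounded_linear_emb y]] .
  have E: "((\<lambda>t. emb (x t) - cscale \<i> (emb (y t))) has_vector_derivative (emb x' - cscale \<i> (emb y'))) (at t)"
    using has_vector_derivative_diff[OF ex ey] .
  have D: "((\<lambda>t. cscale (c t) (emb (x t) - cscale \<i> (emb (y t)))) has_vector_derivative
      (cscale (c t) (emb x' - cscale \<i> (emb y')) + cscale c' (emb (x t) - cscale \<i> (emb (y t))))) (at t)"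
    using bounded_bilinear.has_vector_derivative[OF bounded_bilinear_cscale c E] .
  then show "vd (\<lambda>t. cscale (c t) (emb (x t) - cscale \<i> (emb (y t)))) t =
      cscale (c t) (emb x' - cscale \<i> (emb y')) + cscale c' (emb (x t) - cscale \<i> (emb (y t)))"
    by (simp add: vd_def vector_derivative_at)
  show "vd (\<lambda>t. cconj (cscale (c t) (emb (x t) - cscale \<i> (emb (y t))))) t =
      cconj (cscale (c t) (emb x' - cscale \<i> (emb y')) + cscale c' (emb (x t) - cscale \<i> (emb (y t))))"
    using bounded_linear.has_vector_derivative[OF bounded_linear_cconj D]
    by (simp add: vd_def vector_derivative_at)
qed

lemma vd_emb: "(x has_vector_derivative x') (at t) \<Longrightarrow> vd (\<lambda>t. emb (x t)) t = emb x'"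
  using bounded_linear.has_vector_derivative[OF bounded_linear_emb]
  by (simp add: vd_def vector_derivative_at)

locale curve3 = curve2 +
  assumes Jint: "is_interval J" and J0: "0 \<in> J"
begin

lemma crd_eq: assumes t: "t \<in> J"
  and "crd oone X = crd oone Y" "crd (fI1 \<gamma> t) X = crd (fI1 \<gamma> t) Y" "crd (I2 t) X = crd (I2 t) Y"
    "crd (fI3 \<gamma> I2 t) X = crd (fI3 \<gamma> I2 t) Y" "crd (fI4 \<gamma> t) X = crd (fI4 \<gamma> t) Y" "crd (fI5 \<gamma> t) X = crd (fI5 \<gamma> t) Y"
    "crd (fI6 \<gamma> I2 t) X = crd (fI6 \<gamma> I2 t) Y" "crd (fI7 \<gamma> I2 t) X = crd (fI7 \<gamma> I2 t) Y"
  shows "X = Y"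
proof -
  have "fst X = fst Y" by (rule eqf[OF t]) (use assms(2-) in \<open>simp_all add: crd_def complex_eq_iff\<close>)
  moreover have "snd X = snd Y" by (rule eqf[OF t]) (use assms(2-) in \<open>simp_all add: crd_def complex_eq_iff\<close>)
  ultimately show ?thesis by (simp add: prod_eq_iff)
qed

lemma sm_rho1: "sm J (rho1 \<gamma>)"
  using sm_inner[OF sm_vd[OF Jo sm1] sm5] by (rule sm_eqI) (simp add: rho1_def oinner_inner)
lemma sm_rho2: "sm J (rho2 \<gamma> I2)"
  using sm_inner[OF sm_vd[OF Jo sm2] sm6] by (rule sm_eqI) (simp add: rho2_def oinner_inner)
lemma sm_rho3: "sm J (rho3 \<gamma> I2)"
  using sm_inner[OF sm_vd[OF Jo sm3] sm7] by (rule sm_eqI) (simp add: rho3_def oinner_inner)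

lemma dr: "t \<in> J \<Longrightarrow> (cr \<gamma> has_vector_derivative (- \<i> * complex_of_real (rho1 \<gamma> t) * cr \<gamma> t)) (at t)"
  unfolding cr_def by (rule phase_deriv[OF sint_deriv[OF Jo Jint J0 sm_cont[OF sm_rho1]]])
lemma dq: "t \<in> J \<Longrightarrow> (cq \<gamma> I2 has_vector_derivative (- \<i> * complex_of_real (rho2 \<gamma> I2 t) * cq \<gamma> I2 t)) (at t)"
  unfolding cq_def by (rule phase_deriv[OF sint_deriv[OF Jo Jint J0 sm_cont[OF sm_rho2]]])
lemma dp: "t \<in> J \<Longrightarrow> (cp \<gamma> I2 has_vector_derivative (- \<i> * complex_of_real (rho3 \<gamma> I2 t) * cp \<gamma> I2 t)) (at t)"
  unfolding cp_def by (rule phase_deriv[OF sint_deriv[OF Jo Jint J0 sm_cont[OF sm_rho3]]])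
lemma dmp: "t \<in> J \<Longrightarrow> ((\<lambda>t. - cp \<gamma> I2 t) has_vector_derivative - (- \<i> * complex_of_real (rho3 \<gamma> I2 t) * cp \<gamma> I2 t)) (at t)"
  using has_vector_derivative_minus[OF dp] .

lemma prel: "t \<in> J \<Longrightarrow> cp \<gamma> I2 t = complex_of_real (sqrt 2) * cnj (cr \<gamma> t) * cnj (cq \<gamma> I2 t)"
  unfolding cp_def cr_def cq_def
  by (rule phase_rel[OF sint_lin[OF Jint J0 _ sm_cont[OF sm_rho1] sm_cont[OF sm_rho2]]]) (use rho3_eq in auto)

lemma rnorm: "cr \<gamma> t * cnj (cr \<gamma> t) = 1/2" unfolding cr_def by (rule phase_norm)
lemma qnorm: "cq \<gamma> I2 t * cnj (cq \<gamma> I2 t) = 1/2" unfolding cq_def by (rule phase_norm)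

lemma ce4_fun: "ce4 \<gamma> = (\<lambda>t. emb (fI4 \<gamma> t))" by (rule ext) (simp add: ce4_def)
lemma ce1_fun: "ce1 \<gamma> = (\<lambda>t. cscale (cr \<gamma> t) (emb (fI1 \<gamma> t) - cscale \<i> (emb (fI5 \<gamma> t))))" by (rule ext) (simp add: ce1_def)
lemma ce2_fun: "ce2 \<gamma> I2 = (\<lambda>t. cscale (cq \<gamma> I2 t) (emb (I2 t) - cscale \<i> (emb (fI6 \<gamma> I2 t))))" by (rule ext) (simp add: ce2_def)
lemma ce3_fun: "ce3 \<gamma> I2 = (\<lambda>t. cscale (- cp \<gamma> I2 t) (emb (fI3 \<gamma> I2 t) - cscale \<i> (emb (fI7 \<gamma> I2 t))))" by (rule ext) (simp add: ce3_def)

lemma dsq: "z / complex_of_real (sqrt 2) = z * complex_of_real (sqrt 2) / 2"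
proof -
  have "complex_of_real (sqrt 2) * complex_of_real (sqrt 2) = 2" by (simp flip: of_real_mult)
  then show ?thesis by (simp add: field_simps)
qed
lemma sq2: "complex_of_real (sqrt 2) * complex_of_real (sqrt 2) = 2" by (simp flip: of_real_mult)
lemma isq: "\<i> * \<i> = -1" by simp

lemmas CS = crd_add crd_diff crd_minus crd_cscale crd_cconj crd_emb
  ce1_def ce2_def ce3_def ce4_def phi1_def phi2_def phi3_def
  inner_add_left inner_diff_left inner_scaleR_left inner_minus_left
  of_real_add of_real_diff of_real_minus of_real_mult of_real_0 of_real_1
  complex_cnj_add complex_cnj_diff complex_cnj_minus complex_cnj_mult complex_cnj_complex_of_real
  complex_cnj_cnj complex_cnj_i complex_cnj_divide complex_cnj_power complex_cnj_numeral
  complex_cnj_one complex_cnj_zero dsq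

lemma E1: assumes s: "s \<in> J"
  shows "vd (ce4 \<gamma>) s = cscale (phi1 \<gamma> s) (ce1 \<gamma> s) + cscale (cnj (phi1 \<gamma> s)) (cconj (ce1 \<gamma> s))"
proof -
  note ON = on_all[OF P[OF s]]
  have L: "vd (ce4 \<gamma>) s = emb (vd (fI4 \<gamma>) s)" unfolding ce4_fun by (rule vd_emb[OF d4[OF s]])
  show ?thesis unfolding L
    apply (rule crd_eq[OF s])
    apply (insert rnorm[of s] qnorm[of s] sq2 isq)
    apply (simp_all only: vd4[OF s] CS ON)
    apply ((simp; fail) | (simp add: algebra_simps; fail) | algebra)+
    done
qed

lemma E2: assumes s: "s \<in> J"
  shows "vd (ce1 \<gamma>) s = cscale (- cnj (phi1 \<gamma> s)) (ce4 \<gamma> s) + cscale (phi2 \<gamma> I2 s) (ce2 \<gamma> I2 s)"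
proof -
  note ON = on_all[OF P[OF s]]
  show ?thesis unfolding ce1_fun vd_ce(1)[OF dr[OF s] d1[OF s] d5[OF s]]
    apply (rule crd_eq[OF s])
    apply (insert rnorm[of s] qnorm[of s] sq2 isq)
    apply (simp_all only: dI1t[OF s] D5[OF s] CS ON)
    apply ((simp; fail) | (simp add: algebra_simps; fail) | algebra)+
    done
qed

lemma E3: assumes s: "s \<in> J"
  shows "vd (ce2 \<gamma> I2) s = cscale (- cnj (phi2 \<gamma> I2 s)) (ce1 \<gamma> s) + cscale (phi3 \<gamma> I2 s) (ce3 \<gamma> I2 s)
        - cscale (\<i> / complex_of_real (sqrt 2) * phi1 \<gamma> s) (cconj (ce3 \<gamma> I2 s))"
proof -
  note ON = on_all[OF P[OF s]]
  show ?thesis unfolding ce2_fun vd_ce(1)[OF dq[OF s] d2[OF s] sm_deriv[OF Jo sm6 s]]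
    apply (rule crd_eq[OF s])
    apply (insert rnorm[of s] qnorm[of s] sq2 isq)
    apply (simp_all only: D2[OF s] D6[OF s]  prel[OF s] beta2_eq[OF s] CS ON)
    apply ((simp; fail) | (simp add: algebra_simps; fail) | algebra)+
    done
qed

lemma E4: assumes s: "s \<in> J"
  shows "vd (ce3 \<gamma> I2) s = cscale (- cnj (phi3 \<gamma> I2 s)) (ce2 \<gamma> I2 s)
        + cscale (\<i> / complex_of_real (sqrt 2) * phi1 \<gamma> s) (cconj (ce2 \<gamma> I2 s))"
proof -
  note ON = on_all[OF P[OF s]]
  show ?thesis unfolding ce3_fun vd_ce(1)[OF dmp[OF s] d3[OF s] sm_deriv[OF Jo sm7 s]]
    apply (rule crd_eq[OF s])
    apply (insert rnorm[of s] qnorm[of s] sq2 isq)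
    apply (simp_all only: D3[OF s] D7[OF s]  prel[OF s] beta2_eq[OF s] rho3_eq[OF s] CS ON)
    apply ((simp; fail) | (simp add: algebra_simps; fail) | algebra)+
    done
qed

lemma E5: assumes s: "s \<in> J"
  shows "vd (\<lambda>t. cconj (ce1 \<gamma> t)) s = cscale (- phi1 \<gamma> s) (ce4 \<gamma> s)
        + cscale (cnj (phi2 \<gamma> I2 s)) (cconj (ce2 \<gamma> I2 s))"
proof -
  note ON = on_all[OF P[OF s]]
  show ?thesis unfolding ce1_def vd_ce(2)[OF dr[OF s] d1[OF s] d5[OF s]]
    apply (rule crd_eq[OF s])
    apply (insert rnorm[of s] qnorm[of s] sq2 isq)
    apply (simp_all only: dI1t[OF s] D5[OF s] CS ON)
    apply ((simp; fail) | (simp add: algebra_simps; fail) | algebra)+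
    done
qed

lemma E6: assumes s: "s \<in> J"
  shows "vd (\<lambda>t. cconj (ce2 \<gamma> I2 t)) s = cscale (\<i> / complex_of_real (sqrt 2) * cnj (phi1 \<gamma> s)) (ce3 \<gamma> I2 s)
        - cscale (phi2 \<gamma> I2 s) (cconj (ce1 \<gamma> s)) + cscale (cnj (phi3 \<gamma> I2 s)) (cconj (ce3 \<gamma> I2 s))"
proof -
  note ON = on_all[OF P[OF s]]
  show ?thesis unfolding ce2_def vd_ce(2)[OF dq[OF s] d2[OF s] sm_deriv[OF Jo sm6 s]]
    apply (rule crd_eq[OF s])
    apply (insert rnorm[of s] qnorm[of s] sq2 isq)
    apply (simp_all only: D2[OF s] D6[OF s]  prel[OF s] beta2_eq[OF s] CS ON)
    apply ((simp; fail) | (simp add: algebra_simps; fail) | algebra)+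
    done
qed

lemma E7: assumes s: "s \<in> J"
  shows "vd (\<lambda>t. cconj (ce3 \<gamma> I2 t)) s = cscale (- (\<i> / complex_of_real (sqrt 2)) * cnj (phi1 \<gamma> s)) (ce2 \<gamma> I2 s)
        - cscale (phi3 \<gamma> I2 s) (cconj (ce2 \<gamma> I2 s))"
proof -
  note ON = on_all[OF P[OF s]]
  show ?thesis unfolding ce3_def vd_ce(2)[OF dmp[OF s] d3[OF s] sm_deriv[OF Jo sm7 s]]
    apply (rule crd_eq[OF s])
    apply (insert rnorm[of s] qnorm[of s] sq2 isq)
    apply (simp_all only: D3[OF s] D7[OF s]  prel[OF s] beta2_eq[OF s] rho3_eq[OF s] CS ON)
    apply ((simp; fail) | (simp add: algebra_simps; fail) | algebra)+
    done
qed

end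

theorem theorem2:
  fixes \<gamma> :: "real \<Rightarrow> oct" and I2 :: "real \<Rightarrow> oct" and J :: "real set"
  assumes J: "open J" "is_interval J" "0 \<in> J"
    and smooth: "smooth_on J \<gamma>"
    and im: "\<forall>s\<in>J. \<gamma> s \<in> ImO"
    and unit_speed: "\<forall>s\<in>J. onorm (vd \<gamma> s) = 1"
    and k1_pos: "\<forall>s\<in>J. fk1 \<gamma> s > 0"
    and I2_choice:
      "(\<forall>s\<in>J. fkappa2 \<gamma> s > 0 \<and> I2 s = fI2pos \<gamma> s) \<or>
       ((\<forall>s\<in>J. fkappa2 \<gamma> s = 0) \<and> smooth_on J I2 \<and>
        (\<forall>s\<in>J. I2 s \<in> ImO \<and> onorm (I2 s) = 1 \<and> oinner (I2 s) (fI4 \<gamma> s) = 0 \<and>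
                oinner (I2 s) (fI1 \<gamma> s) = 0 \<and> oinner (I2 s) (fI5 \<gamma> s) = 0))"
    and s: "s \<in> J"
  shows
    "(vd (ce4 \<gamma>) s = cscale (phi1 \<gamma> s) (ce1 \<gamma> s) + cscale (cnj (phi1 \<gamma> s)) (cconj (ce1 \<gamma> s))) \<and>
    (vd (ce1 \<gamma>) s = cscale (- cnj (phi1 \<gamma> s)) (ce4 \<gamma> s) + cscale (phi2 \<gamma> I2 s) (ce2 \<gamma> I2 s)) \<and>
    (vd (ce2 \<gamma> I2) s = cscale (- cnj (phi2 \<gamma> I2 s)) (ce1 \<gamma> s) + cscale (phi3 \<gamma> I2 s) (ce3 \<gamma> I2 s)
        - cscale (\<i> / complex_of_real (sqrt 2) * phi1 \<gamma> s) (cconj (ce3 \<gamma> I2 s))) \<and>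
    (vd (ce3 \<gamma> I2) s = cscale (- cnj (phi3 \<gamma> I2 s)) (ce2 \<gamma> I2 s)
        + cscale (\<i> / complex_of_real (sqrt 2) * phi1 \<gamma> s) (cconj (ce2 \<gamma> I2 s))) \<and>
    (vd (\<lambda>t. cconj (ce1 \<gamma> t)) s = cscale (- phi1 \<gamma> s) (ce4 \<gamma> s)
        + cscale (cnj (phi2 \<gamma> I2 s)) (cconj (ce2 \<gamma> I2 s))) \<and>
    (vd (\<lambda>t. cconj (ce2 \<gamma> I2 t)) s = cscale (\<i> / complex_of_real (sqrt 2) * cnj (phi1 \<gamma> s)) (ce3 \<gamma> I2 s)
        - cscale (phi2 \<gamma> I2 s) (cconj (ce1 \<gamma> s)) + cscale (cnj (phi3 \<gamma> I2 s)) (cconj (ce3 \<gamma> I2 s))) \<and>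
    (vd (\<lambda>t. cconj (ce3 \<gamma> I2 t)) s = cscale (- (\<i> / complex_of_real (sqrt 2)) * cnj (phi1 \<gamma> s)) (ce2 \<gamma> I2 s)
        - cscale (phi3 \<gamma> I2 s) (cconj (ce2 \<gamma> I2 s)))"
proof -
  have smg: "sm J \<gamma>" using smooth_on_sm[OF J(1) smooth] .
  have us': "\<forall>s\<in>J. norm (vd \<gamma> s) = 1" using unit_speed by (simp add: onorm_norm)
  interpret curve \<gamma> J using J(1) smg im us' k1_pos by unfold_locales
  have I2f: "sm J I2 \<and>
    (\<forall>s\<in>J. I2 s \<in> ImO \<and> I2 s \<bullet> I2 s = 1 \<and> I2 s \<bullet> fI4 \<gamma> s = 0 \<and> I2 s \<bullet> fI1 \<gamma> s = 0 \<and> I2 s \<bullet> fI5 \<gamma> s = 0) \<and>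
    (\<forall>s\<in>J. vd (fI1 \<gamma>) s = (- fk1 \<gamma> s) *\<^sub>R fI4 \<gamma> s + fkappa2 \<gamma> s *\<^sub>R I2 s + rho1 \<gamma> s *\<^sub>R fI5 \<gamma> s)"
    using I2_choice
  proof
    assume pc: "\<forall>s\<in>J. fkappa2 \<gamma> s > 0 \<and> I2 s = fI2pos \<gamma> s"
    show ?thesis using pos_case[OF pc] by blast
  next
    assume zc: "(\<forall>s\<in>J. fkappa2 \<gamma> s = 0) \<and> smooth_on J I2 \<and>
        (\<forall>s\<in>J. I2 s \<in> ImO \<and> onorm (I2 s) = 1 \<and> oinner (I2 s) (fI4 \<gamma> s) = 0 \<and>
                oinner (I2 s) (fI1 \<gamma> s) = 0 \<and> oinner (I2 s) (fI5 \<gamma> s) = 0)"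
    have a: "sm J I2" using smooth_on_sm[OF J(1)] zc by blast
    have b: "\<forall>s\<in>J. I2 s \<in> ImO \<and> I2 s \<bullet> I2 s = 1 \<and> I2 s \<bullet> fI4 \<gamma> s = 0 \<and> I2 s \<bullet> fI1 \<gamma> s = 0 \<and> I2 s \<bullet> fI5 \<gamma> s = 0"
      using zc by (simp add: onorm_norm oinner_inner inner_self_norm)
    have c: "\<forall>s\<in>J. vd (fI1 \<gamma>) s = (- fk1 \<gamma> s) *\<^sub>R fI4 \<gamma> s + fkappa2 \<gamma> s *\<^sub>R I2 s + rho1 \<gamma> s *\<^sub>R fI5 \<gamma> s"
      using zero_case zc by blast
    show ?thesis using a b c by blast
  qed
  interpret curve3 \<gamma> J I2
    using J(1) smg im us' k1_pos I2f J(2) J(3) by unfold_locales blast+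
  show ?thesis using E1[OF s] E2[OF s] E3[OF s] E4[OF s] E5[OF s] E6[OF s] E7[OF s] by (intro conjI)
qed

end
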